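(* Consider the MPCC $\min f(z)$ s.t. $g(z)\le0$, $h(z)=0$, $0\le G(z)\perp H(z)\ge 0$, with differentiable $f,g,h,G,H$ on $\mathbb{R}^n$. Let $\epsilon^k>0$ with $\epsilon^k\to0$, and let $p^k\in\mathbb{R}^m$ with each $p^k_i\in\{0\}\cup[0,\epsilon^k/2]$ be the parameters produced by the Bounding Algorithm. Suppose this generates a sequence $z^k\to\bar z$, where each $z^k$ is a KKT point of BA$(\epsilon^k)$ with parameters $p^k$ and NLP multipliers $u^k=(u^{g,k},u^{h,k},u^{\Phi,k})$, and suppose MPCC-MFCQ holds at $\bar z$. Then: 1. For all $k$ with $\epsilon^k>0$ sufficiently small, the multipliers $u^k$ are bounded. 2. $\bar z$ is a C-stationary point of the MPCC, with multipliers given by $\bar\lambda^g=\bar u^g=\lim_k u^{g,k}$, $\bar\lambda^h=\bar u^h=\lim_k u^{h,k}$, $\bar\lambda^G_i=\bar u^\Phi_i=\lim_k u^{\Phi,k}_i$ for $i\in\alpha(\bar z)$, $\bar\lambda^H_i=\bar u^\Phi_i=\lim_k u^{\Phi,k}_i$ for $i\in\gamma(\bar z)$, and $\bar\lambda^G_i=\bar u^\Phi_i\theta_i$, $\bar\lambda^H_i=\bar u^\Phi_i(1-\theta_i)$ for $i\in\beta(\bar z)$, for some $\theta_i\in[0,1]$ (limits taken along a convergent subsequence of the bounded multipliers). 3. If $\bar u^\Phi_i\ge 0$ for all $i\in\beta(\bar z)$, then $\bar z$ is S-stationary and therefore B-stationary.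
   Context: Index sets at feasible $\bar z$: $I_g(\bar z)=\{i:g_i(\bar z)=0\}$, $I_h=\{1,\dots,n_h\}$, $\alpha(\bar z)=\{i:G_i(\bar z)=0<H_i(\bar z)\}$, $\gamma(\bar z)=\{i:G_i(\bar z)>0=H_i(\bar z)\}$, $\beta(\bar z)=\{i:G_i(\bar z)=H_i(\bar z)=0\}$. Smoothed NCP function: $\Phi^\epsilon_i(z)=\tfrac12\big(G_i(z)+H_i(z)-\sqrt{(G_i(z)-H_i(z))^2+\epsilon^2}\big)$. Problem BA$(\epsilon)$ with parameters $p\in\mathbb{R}^m$, $p_i\in[0,\epsilon/2]$: $\min f(z)$ s.t. $g(z)\le0$ (multipliers $u^g$), $h(z)=0$ ($u^h$), $\Phi^\epsilon_i(z)+p_i=0$, $i=1,\dots,m$ ($u^\Phi_i$). A KKT point $z^k$ of BA$(\epsilon^k)$ is feasible and has $u^{g,k}\ge0$ with $0=\nabla f(z^k)+\sum_{i\in I_g(z^k)}u^{g,k}_i\nabla g_i(z^k)+\sum_{i}u^{h,k}_i\nabla h_i(z^k)-\sum_{i=1}^m u^{\Phi,k}_i\nabla\Phi^{\epsilon^k}_i(z^k)$. Bounding Algorithm: start with $p^0=0$, $\epsilon^0>0$, $\kappa\in(0,1)$; at iteration $k$ compute a KKT point $z^k$ and multipliers $u^k$ of BA$(\epsilon^k)$ with parameters $p^k$; set $P_0=\{i:p^k_i=0,\,u^{\Phi,k}_i>0\}$, $P_\epsilon=\{i:p^k_i=\epsilon^k/2,\,u^{\Phi,k}_i<0\}$, $\epsilon^{k+1}=\kappa\epsilon^k$,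 and $p^{k+1}_i=\epsilon^{k+1}/2$ for $i\in P_0$, $0$ for $i\in P_\epsilon$, $\kappa p^k_i$ otherwise. MPCC-MFCQ at $\bar z$: the gradients $\nabla h_i(\bar z)$ ($i\in I_h$), $\nabla G_i(\bar z)$ ($i\in\alpha(\bar z)\cup\beta(\bar z)$), $\nabla H_i(\bar z)$ ($i\in\gamma(\bar z)\cup\beta(\bar z)$) are linearly independent and there is $d$ orthogonal to all of them with $\nabla g_i(\bar z)^Td<0$ for $i\in I_g(\bar z)$ (equivalently, MFCQ for the NLP obtained by imposing $G_i=0$ for $i\in\alpha\cup\beta$, $H_i=0$ for $i\in\gamma\cup\beta$). Stationarity: $\bar z$ is weakly stationary if there are $\bar\lambda^g\ge0$ and $\bar\lambda^h,\bar\lambda^G,\bar\lambda^H$ with $0=\nabla f(\bar z)+\sum_{i\in I_g(\bar z)}\bar\lambda^g_i\nabla g_i(\bar z)+\sum_{i\in I_h}\bar\lambda^h_i\nabla h_i(\bar z)-\sum_{i\in\alpha\cup\beta}\bar\lambda^G_i\nabla G_i(\bar z)-\sum_{i\in\gamma\cup\beta}\bar\lambda^H_i\nabla H_i(\bar z)$; it is C-stationary if moreover $\bar\lambda^G_i\bar\lambda^H_i\ge0$ for all $i\in\beta(\bar z)$, and S-stationary if $\bar\lambda^G_i,\bar\lambda^H_i\ge 0$ for all $i\in\beta(\bar z)$. B-stationarity: $\nabla f(\bar z)^Td\ge0$ for all $d$ in the tangent cone of the MPCC feasible set at $\bar z$. *)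

theory Defs
  imports "HOL-Analysis.Analysis"
begin

text \<open>Data of the MPCC: min f(z) s.t. g_i(z) \<le> 0 (i < ng), h_i(z) = 0 (i < nh),
  0 \<le> G_i(z) \<perp> H_i(z) \<ge> 0 (i < m). Indices are 0-based.\<close>

record 'a mpcc =
  obj :: "'a \<Rightarrow> real"
  gc  :: "nat \<Rightarrow> 'a \<Rightarrow> real"
  ng  :: nat
  hc  :: "nat \<Rightarrow> 'a \<Rightarrow> real"
  nh  :: nat
  Gc  :: "nat \<Rightarrow> 'a \<Rightarrow> real"
  Hc  :: "nat \<Rightarrow> 'a \<Rightarrow> real"
  mc  :: nat

definition grad :: "('a::euclidean_space \<Rightarrow> real) \<Rightarrow> 'a \<Rightarrow> 'a" where
  "grad \<phi> z = (SOME D. GDERIV \<phi> z :> D)"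

definition C1_fun :: "('a::euclidean_space \<Rightarrow> real) \<Rightarrow> bool" where
  "C1_fun \<phi> \<longleftrightarrow> (\<forall>z. \<phi> differentiable (at z)) \<and> continuous_on UNIV (grad \<phi>)"

definition Ig :: "'a mpcc \<Rightarrow> 'a \<Rightarrow> nat set" where
  "Ig P z = {i. i < ng P \<and> gc P i z = 0}"

definition alpha :: "'a mpcc \<Rightarrow> 'a \<Rightarrow> nat set" where
  "alpha P z = {i. i < mc P \<and> Gc P i z = 0 \<and> 0 < Hc P i z}"

definition gamma :: "'a mpcc \<Rightarrow> 'a \<Rightarrow> nat set" where
  "gamma P z = {i. i < mc P \<and> 0 < Gc P i z \<and> Hc P i z = 0}"

definition beta :: "'a mpcc \<Rightarrow> 'a \<Rightarrow> nat set" where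
  "beta P z = {i. i < mc P \<and> Gc P i z = 0 \<and> Hc P i z = 0}"

definition mpcc_feasible :: "'a mpcc \<Rightarrow> 'a \<Rightarrow> bool" where
  "mpcc_feasible P z \<longleftrightarrow>
     (\<forall>i<ng P. gc P i z \<le> 0) \<and> (\<forall>i<nh P. hc P i z = 0) \<and>
     (\<forall>i<mc P. 0 \<le> Gc P i z \<and> 0 \<le> Hc P i z \<and> Gc P i z * Hc P i z = 0)"

definition mpcc_set :: "'a mpcc \<Rightarrow> 'a set" where
  "mpcc_set P = {z. mpcc_feasible P z}"

definition Phi :: "real \<Rightarrow> 'a mpcc \<Rightarrow> nat \<Rightarrow> 'a \<Rightarrow> real" where
  "Phi eps P i z = (Gc P i z + Hc P i z - sqrt ((Gc P i z - Hc P i z)\<^sup>2 + eps\<^sup>2)) / 2"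

definition BA_feasible :: "real \<Rightarrow> (nat \<Rightarrow> real) \<Rightarrow> 'a mpcc \<Rightarrow> 'a \<Rightarrow> bool" where
  "BA_feasible eps p P z \<longleftrightarrow>
     (\<forall>i<ng P. gc P i z \<le> 0) \<and> (\<forall>i<nh P. hc P i z = 0) \<and>
     (\<forall>i<mc P. Phi eps P i z + p i = 0)"

definition BA_KKT :: "real \<Rightarrow> (nat \<Rightarrow> real) \<Rightarrow> ('a::euclidean_space) mpcc \<Rightarrow> 'a
    \<Rightarrow> (nat \<Rightarrow> real) \<Rightarrow> (nat \<Rightarrow> real) \<Rightarrow> (nat \<Rightarrow> real) \<Rightarrow> bool" where
  "BA_KKT eps p P z ug uh uP \<longleftrightarrow>
     BA_feasible eps p P z \<and> (\<forall>i<ng P. 0 \<le> ug i) \<and>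
     (\<forall>i<ng P. i \<notin> Ig P z \<longrightarrow> ug i = 0) \<and>
     grad (obj P) z + (\<Sum>i\<in>Ig P z. ug i *\<^sub>R grad (gc P i) z)
       + (\<Sum>i<nh P. uh i *\<^sub>R grad (hc P i) z)
       - (\<Sum>i<mc P. uP i *\<^sub>R grad (Phi eps P i) z) = 0"

definition bounding_alg :: "('a::euclidean_space) mpcc \<Rightarrow> real \<Rightarrow> (nat \<Rightarrow> real)
    \<Rightarrow> (nat \<Rightarrow> nat \<Rightarrow> real) \<Rightarrow> (nat \<Rightarrow> 'a)
    \<Rightarrow> (nat \<Rightarrow> nat \<Rightarrow> real) \<Rightarrow> (nat \<Rightarrow> nat \<Rightarrow> real) \<Rightarrow> (nat \<Rightarrow> nat \<Rightarrow> real) \<Rightarrow> bool" where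
  "bounding_alg P \<kappa> eps p z ug uh uP \<longleftrightarrow>
     0 < eps 0 \<and> 0 < \<kappa> \<and> \<kappa> < 1 \<and>
     (\<forall>k. eps (Suc k) = \<kappa> * eps k) \<and>
     (\<forall>i. p 0 i = 0) \<and>
     (\<forall>k i. p (Suc k) i =
        (if p k i = 0 \<and> 0 < uP k i then eps (Suc k) / 2
         else if p k i = eps k / 2 \<and> uP k i < 0 then 0
         else \<kappa> * p k i)) \<and>
     (\<forall>k. BA_KKT (eps k) (p k) P (z k) (ug k) (uh k) (uP k))"

definition MPCC_MFCQ :: "('a::euclidean_space) mpcc \<Rightarrow> 'a \<Rightarrow> bool" where
  "MPCC_MFCQ P z \<longleftrightarrow>
     (\<forall>ch cG cH.
        (\<Sum>i<nh P. ch i *\<^sub>R grad (hc P i) z)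
        + (\<Sum>i\<in>alpha P z \<union> beta P z. cG i *\<^sub>R grad (Gc P i) z)
        + (\<Sum>i\<in>gamma P z \<union> beta P z. cH i *\<^sub>R grad (Hc P i) z) = 0 \<longrightarrow>
        (\<forall>i<nh P. ch i = 0) \<and> (\<forall>i\<in>alpha P z \<union> beta P z. cG i = 0) \<and>
        (\<forall>i\<in>gamma P z \<union> beta P z. cH i = 0)) \<and>
     (\<exists>d. (\<forall>i<nh P. grad (hc P i) z \<bullet> d = 0) \<and>
          (\<forall>i\<in>alpha P z \<union> beta P z. grad (Gc P i) z \<bullet> d = 0) \<and>
          (\<forall>i\<in>gamma P z \<union> beta P z. grad (Hc P i) z \<bullet> d = 0) \<and>
          (\<forall>i\<in>Ig P z. grad (gc P i) z \<bullet> d < 0))"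

definition weak_stat_mult :: "('a::euclidean_space) mpcc \<Rightarrow> 'a
    \<Rightarrow> (nat \<Rightarrow> real) \<Rightarrow> (nat \<Rightarrow> real) \<Rightarrow> (nat \<Rightarrow> real) \<Rightarrow> (nat \<Rightarrow> real) \<Rightarrow> bool" where
  "weak_stat_mult P z lg lh lG lH \<longleftrightarrow>
     mpcc_feasible P z \<and> (\<forall>i\<in>Ig P z. 0 \<le> lg i) \<and>
     grad (obj P) z + (\<Sum>i\<in>Ig P z. lg i *\<^sub>R grad (gc P i) z)
       + (\<Sum>i<nh P. lh i *\<^sub>R grad (hc P i) z)
       - (\<Sum>i\<in>alpha P z \<union> beta P z. lG i *\<^sub>R grad (Gc P i) z)
       - (\<Sum>i\<in>gamma P z \<union> beta P z. lH i *\<^sub>R grad (Hc P i) z) = 0"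

definition C_stat_mult :: "('a::euclidean_space) mpcc \<Rightarrow> 'a
    \<Rightarrow> (nat \<Rightarrow> real) \<Rightarrow> (nat \<Rightarrow> real) \<Rightarrow> (nat \<Rightarrow> real) \<Rightarrow> (nat \<Rightarrow> real) \<Rightarrow> bool" where
  "C_stat_mult P z lg lh lG lH \<longleftrightarrow>
     weak_stat_mult P z lg lh lG lH \<and> (\<forall>i\<in>beta P z. 0 \<le> lG i * lH i)"

definition S_stat_mult :: "('a::euclidean_space) mpcc \<Rightarrow> 'a
    \<Rightarrow> (nat \<Rightarrow> real) \<Rightarrow> (nat \<Rightarrow> real) \<Rightarrow> (nat \<Rightarrow> real) \<Rightarrow> (nat \<Rightarrow> real) \<Rightarrow> bool" where
  "S_stat_mult P z lg lh lG lH \<longleftrightarrow>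
     weak_stat_mult P z lg lh lG lH \<and> (\<forall>i\<in>beta P z. 0 \<le> lG i \<and> 0 \<le> lH i)"

definition C_stationary :: "('a::euclidean_space) mpcc \<Rightarrow> 'a \<Rightarrow> bool" where
  "C_stationary P z \<longleftrightarrow> (\<exists>lg lh lG lH. C_stat_mult P z lg lh lG lH)"

definition S_stationary :: "('a::euclidean_space) mpcc \<Rightarrow> 'a \<Rightarrow> bool" where
  "S_stationary P z \<longleftrightarrow> (\<exists>lg lh lG lH. S_stat_mult P z lg lh lG lH)"

definition tangent_cone :: "('a::real_normed_vector) set \<Rightarrow> 'a \<Rightarrow> 'a set" where
  "tangent_cone X z = {d. \<exists>zs t. (\<forall>k. zs k \<in> X) \<and> zs \<longlonglongrightarrow> z \<and>
      (\<forall>k. 0 < t k) \<and> t \<longlonglongrightarrow> 0 \<and> (\<lambda>k. (1 / t k) *\<^sub>R (zs k - z)) \<longlonglongrightarrow> d}"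

definition B_stationary :: "('a::euclidean_space) mpcc \<Rightarrow> 'a \<Rightarrow> bool" where
  "B_stationary P z \<longleftrightarrow> mpcc_feasible P z \<and>
     (\<forall>d\<in>tangent_cone (mpcc_set P) z. 0 \<le> grad (obj P) z \<bullet> d)"

end

theory Submission
  imports Defs
begin

lemma grad_works:
  fixes \<phi> :: "'a::euclidean_space \<Rightarrow> real"
  assumes "\<phi> differentiable (at z)"
  shows "GDERIV \<phi> z :> grad \<phi> z"
proof -
  obtain f' where f': "(\<phi> has_derivative f') (at z)" using assms differentiable_def by blast
  have lin: "linear f'" using f' has_derivative_linear by blast
  have "f' = (\<lambda>h. h \<bullet> adjoint f' 1)"
    using adjoint_works[OF lin, of _ 1] by (auto simp: fun_eq_iff)
  then have "\<exists>D. GDERIV \<phi> z :> D" using f' unfolding gderiv_def by metis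
  then show ?thesis unfolding grad_def by (rule someI_ex)
qed

lemma gderiv_unique:
  fixes \<phi> :: "'a::euclidean_space \<Rightarrow> real"
  assumes "GDERIV \<phi> z :> D1" "GDERIV \<phi> z :> D2" shows "D1 = D2"
proof -
  have "(\<lambda>h. h \<bullet> D1) = (\<lambda>h. h \<bullet> D2)" using assms unfolding gderiv_def
    by (rule has_derivative_unique)
  then have "(D1 - D2) \<bullet> D1 = (D1 - D2) \<bullet> D2" by metis
  then have "(D1 - D2) \<bullet> (D1 - D2) = 0" by (simp add: inner_diff_right)
  then show ?thesis by simp
qed

lemma grad_eq:
  fixes \<phi> :: "'a::euclidean_space \<Rightarrow> real"
  assumes "GDERIV \<phi> z :> D" shows "grad \<phi> z = D"
proof -
  have "\<exists>D. GDERIV \<phi> z :> D" using assms by blast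
  then have "GDERIV \<phi> z :> grad \<phi> z" unfolding grad_def by (rule someI_ex)
  then show ?thesis using assms gderiv_unique by blast
qed

lemma grad_Phi:
  fixes P :: "('a::euclidean_space) mpcc"
  assumes G: "Gc P i differentiable (at z)" and H: "Hc P i differentiable (at z)" and e: "e \<noteq> 0"
  shows "grad (Phi e P i) z =
    ((1 - (Gc P i z - Hc P i z) / sqrt ((Gc P i z - Hc P i z)\<^sup>2 + e\<^sup>2)) / 2) *\<^sub>R grad (Gc P i) z
    + (1 - (1 - (Gc P i z - Hc P i z) / sqrt ((Gc P i z - Hc P i z)\<^sup>2 + e\<^sup>2)) / 2) *\<^sub>R grad (Hc P i) z"
proof -
  define x where "x = Gc P i z - Hc P i z"
  define s where "s = sqrt (x\<^sup>2 + e\<^sup>2)"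
  have pos: "0 < x\<^sup>2 + e\<^sup>2" using e by (simp add: add_nonneg_pos)
  have spos: "0 < s" unfolding s_def using pos by simp
  have dG: "GDERIV (Gc P i) z :> grad (Gc P i) z" using G by (rule grad_works)
  have dH: "GDERIV (Hc P i) z :> grad (Hc P i) z" using H by (rule grad_works)
  have d1: "GDERIV (\<lambda>z. Gc P i z - Hc P i z) z :> grad (Gc P i) z - grad (Hc P i) z"
    using GDERIV_diff[OF dG dH] .
  have d2: "GDERIV (\<lambda>z. (Gc P i z - Hc P i z)\<^sup>2 + e\<^sup>2) z :> (2 * x) *\<^sub>R (grad (Gc P i) z - grad (Hc P i) z)"
    apply (rule GDERIV_DERIV_compose[OF d1, where g="\<lambda>y. y\<^sup>2 + e\<^sup>2"])
    unfolding x_def by (auto intro!: derivative_eq_intros)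
  have d3: "GDERIV (\<lambda>z. sqrt ((Gc P i z - Hc P i z)\<^sup>2 + e\<^sup>2)) z :>
      (inverse s / 2) *\<^sub>R ((2 * x) *\<^sub>R (grad (Gc P i) z - grad (Hc P i) z))"
    apply (rule GDERIV_DERIV_compose[OF d2, where g=sqrt])
    unfolding s_def x_def using pos x_def by (auto intro!: DERIV_real_sqrt)
  have d4: "GDERIV (\<lambda>z. Gc P i z + Hc P i z - sqrt ((Gc P i z - Hc P i z)\<^sup>2 + e\<^sup>2)) z :>
      grad (Gc P i) z + grad (Hc P i) z - (inverse s / 2) *\<^sub>R ((2 * x) *\<^sub>R (grad (Gc P i) z - grad (Hc P i) z))"
    by (intro GDERIV_diff GDERIV_add dG dH d3)
  have d5: "GDERIV (Phi e P i) z :> (1/2) *\<^sub>R (grad (Gc P i) z + grad (Hc P i) z - (inverse s / 2) *\<^sub>R ((2 * x) *\<^sub>R (grad (Gc P i) z - grad (Hc P i) z)))"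
  proof -
    have dd: "DERIV (\<lambda>y::real. y / 2) y :> 1/2" for y by (auto intro!: derivative_eq_intros)
    have "(Phi e P i) = (\<lambda>z. (\<lambda>y. y / 2) (Gc P i z + Hc P i z - sqrt ((Gc P i z - Hc P i z)\<^sup>2 + e\<^sup>2)))"
      unfolding Phi_def by auto
    then show ?thesis using GDERIV_DERIV_compose[OF d4 dd] by simp
  qed
  have aux: "(1/2) *\<^sub>R (a + b - q *\<^sub>R (a - b)) = ((1-q)/2) *\<^sub>R a + (1 - (1-q)/2) *\<^sub>R b"
    for a b :: 'a and q :: real
    by (simp add: euclidean_eq_iff[where 'a='a] inner_simps field_simps)
  have c: "(inverse s / 2) *\<^sub>R ((2 * x) *\<^sub>R v) = (x / s) *\<^sub>R v" for v :: 'a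
    by (simp add: field_simps)
  show ?thesis
    apply (subst grad_eq[OF d5])
    unfolding x_def[symmetric] s_def[symmetric] c aux ..
qed

lemma tangent_lim:
  fixes \<phi> :: "'a::euclidean_space \<Rightarrow> real"
  assumes der: "GDERIV \<phi> x :> D" and zs: "zs \<longlonglongrightarrow> x" and tpos: "\<forall>k. 0 < t k"
    and w: "(\<lambda>k. (1 / t k) *\<^sub>R (zs k - x)) \<longlonglongrightarrow> d"
  shows "(\<lambda>k. (\<phi> (zs k) - \<phi> x) / t k) \<longlonglongrightarrow> D \<bullet> d"
proof -
  define w where "w k = (1 / t k) *\<^sub>R (zs k - x)" for k
  define R where "R k = (\<phi> (zs k) - \<phi> x - (zs k - x) \<bullet> D) / t k" for k
  have alt: "\<forall>e>0. \<exists>\<delta>>0. \<forall>y. norm (y - x) < \<delta> \<longrightarrow> \<bar>\<phi> y - \<phi> x - (y - x) \<bullet> D\<bar> \<le> e * norm (y - x)"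
    using der unfolding gderiv_def has_derivative_at_alt by auto
  have nw: "norm (w k) = norm (zs k - x) / t k" for k
    using tpos[rule_format, of k] by (simp add: w_def)
  have R0: "R \<longlonglongrightarrow> 0"
  proof (rule LIMSEQ_I)
    fix r :: real assume r: "0 < r"
    define e where "e = r / (2 * (norm d + 1))"
    have e: "0 < e" using r by (simp add: e_def add_nonneg_pos)
    obtain \<delta> where \<delta>: "\<delta> > 0" "\<forall>y. norm (y - x) < \<delta> \<longrightarrow> \<bar>\<phi> y - \<phi> x - (y - x) \<bullet> D\<bar> \<le> e * norm (y - x)"
      using alt e by blast
    have "eventually (\<lambda>k. norm (zs k - x) < \<delta>) sequentially"
      using zs \<delta>(1) by (simp add: tendsto_iff dist_norm)
    moreover have "eventually (\<lambda>k. norm (w k) < norm d + 1) sequentially"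
    proof -
      have "(\<lambda>k. norm (w k)) \<longlonglongrightarrow> norm d" using w unfolding w_def[symmetric] by (intro tendsto_intros)
      then show ?thesis by (rule order_tendstoD) simp
    qed
    ultimately have "eventually (\<lambda>k. norm (R k) < r) sequentially"
    proof eventually_elim
      case (elim k)
      have tk: "0 < t k" using tpos by simp
      have "\<bar>R k\<bar> = \<bar>\<phi> (zs k) - \<phi> x - (zs k - x) \<bullet> D\<bar> / t k"
        using tk by (simp add: R_def abs_divide)
      also have "\<dots> \<le> e * norm (zs k - x) / t k"
        using \<delta>(2) elim(1) tk by (simp add: divide_right_mono)
      also have "\<dots> = e * norm (w k)" by (simp add: nw)
      also have "\<dots> \<le> e * (norm d + 1)" using elim(2) e by simp
      also have "\<dots> = r / 2"
      proof -
        have "norm d + 1 \<noteq> 0" by (metis add_nonneg_pos norm_ge_zero zero_less_one less_irrefl)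
        then show ?thesis by (simp add: e_def field_simps)
      qed
      also have "\<dots> < r" using r by simp
      finally show ?case by simp
    qed
    then show "\<exists>no. \<forall>k\<ge>no. norm (R k - 0) < r" by (simp add: eventually_sequentially)
  qed
  have eq: "(\<phi> (zs k) - \<phi> x) / t k = w k \<bullet> D + R k" for k
  proof -
    have "w k \<bullet> D = ((zs k - x) \<bullet> D) / t k" unfolding w_def inner_scaleR_left by simp
    then show ?thesis by (simp add: R_def diff_divide_distrib)
  qed
  have "(\<lambda>k. w k \<bullet> D + R k) \<longlonglongrightarrow> d \<bullet> D + 0"
    using w R0 unfolding w_def[symmetric] by (intro tendsto_intros)
  then show ?thesis unfolding eq by (simp add: inner_commute)
qed

lemma tangent_le:
  fixes \<phi> :: "'a::euclidean_space \<Rightarrow> real"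
  assumes der: "GDERIV \<phi> x :> D" and zs: "zs \<longlonglongrightarrow> x" and tpos: "\<forall>k. 0 < t k"
    and w: "(\<lambda>k. (1 / t k) *\<^sub>R (zs k - x)) \<longlonglongrightarrow> d" and "\<phi> x = 0"
    and ev: "eventually (\<lambda>k. \<phi> (zs k) \<le> 0) sequentially"
  shows "D \<bullet> d \<le> 0"
proof (rule tendsto_upperbound[OF tangent_lim[OF der zs tpos w]])
  show "\<forall>\<^sub>F k in sequentially. (\<phi> (zs k) - \<phi> x) / t k \<le> 0"
    using ev proof eventually_elim
    case (elim k) then show ?case using tpos[rule_format, of k] \<open>\<phi> x = 0\<close>
      by (simp add: divide_nonpos_pos)
  qed
qed simp

lemma tangent_ge:
  fixes \<phi> :: "'a::euclidean_space \<Rightarrow> real"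
  assumes der: "GDERIV \<phi> x :> D" and zs: "zs \<longlonglongrightarrow> x" and tpos: "\<forall>k. 0 < t k"
    and w: "(\<lambda>k. (1 / t k) *\<^sub>R (zs k - x)) \<longlonglongrightarrow> d" and "\<phi> x = 0"
    and ev: "eventually (\<lambda>k. 0 \<le> \<phi> (zs k)) sequentially"
  shows "0 \<le> D \<bullet> d"
proof -
  have "(- D) \<bullet> d \<le> 0"
    by (rule tangent_le[OF GDERIV_minus[OF der] zs tpos w]) (use assms in auto)
  then show ?thesis by simp
qed

lemma subseq_multi:
  fixes f :: "nat \<Rightarrow> nat \<Rightarrow> real"
  assumes "\<forall>k. \<forall>i<n. \<bar>f k i\<bar> \<le> B"
  shows "\<exists>r L. strict_mono r \<and> (\<forall>i<n. (\<lambda>k. f (r k) i) \<longlonglongrightarrow> L i)"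
  using assms
proof (induction n)
  case 0
  then show ?case by (auto intro: strict_mono_id[unfolded id_def])
next
  case (Suc n)
  then obtain r L where r: "strict_mono r" "\<forall>i<n. (\<lambda>k. f (r k) i) \<longlonglongrightarrow> L i" by auto
  have "bounded (range (\<lambda>k. f (r k) n))"
    unfolding bounded_real using Suc.prems by auto
  then obtain l s where s: "strict_mono s" "((\<lambda>k. f (r k) n) \<circ> s) \<longlonglongrightarrow> l"
    using bounded_imp_convergent_subsequence by blast
  have "strict_mono (r \<circ> s)" using r(1) s(1) by (rule strict_mono_o)
  moreover have "\<forall>i<Suc n. (\<lambda>k. f ((r \<circ> s) k) i) \<longlonglongrightarrow> (L(n := l)) i"
  proof (intro allI impI)
    fix i assume "i < Suc n"
    show "(\<lambda>k. f ((r \<circ> s) k) i) \<longlonglongrightarrow> (L(n := l)) i"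
    proof (cases "i = n")
      case True then show ?thesis using s(2) by (simp add: o_def)
    next
      case False
      then have "i < n" using \<open>i < Suc n\<close> by simp
      then show ?thesis using LIMSEQ_subseq_LIMSEQ[OF r(2)[rule_format, OF \<open>i<n\<close>] s(1)] False
        by (simp add: o_def)
    qed
  qed
  ultimately show ?case by blast
qed

lemma subseq4:
  fixes f1 f2 f3 f4 :: "nat \<Rightarrow> nat \<Rightarrow> real"
  assumes "\<forall>k. \<forall>i<n1. \<bar>f1 k i\<bar> \<le> B" "\<forall>k. \<forall>i<n2. \<bar>f2 k i\<bar> \<le> B"
    "\<forall>k. \<forall>i<n3. \<bar>f3 k i\<bar> \<le> B" "\<forall>k. \<forall>i<n4. \<bar>f4 k i\<bar> \<le> B"
  shows "\<exists>r L1 L2 L3 L4. strict_mono r \<and> (\<forall>i<n1. (\<lambda>k. f1 (r k) i) \<longlonglongrightarrow> L1 i)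
     \<and> (\<forall>i<n2. (\<lambda>k. f2 (r k) i) \<longlonglongrightarrow> L2 i) \<and> (\<forall>i<n3. (\<lambda>k. f3 (r k) i) \<longlonglongrightarrow> L3 i)
     \<and> (\<forall>i<n4. (\<lambda>k. f4 (r k) i) \<longlonglongrightarrow> L4 i)"
proof -
  define F where "F k j = (if j < n1 then f1 k j else if j < n1 + n2 then f2 k (j - n1)
     else if j < n1 + n2 + n3 then f3 k (j - n1 - n2) else f4 k (j - n1 - n2 - n3))" for k j
  have "\<forall>k. \<forall>j<n1+n2+n3+n4. \<bar>F k j\<bar> \<le> B"
    using assms unfolding F_def by (auto simp: not_less)
  then obtain r L where r: "strict_mono r" "\<forall>j<n1+n2+n3+n4. (\<lambda>k. F (r k) j) \<longlonglongrightarrow> L j"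
    using subseq_multi by blast
  have 1: "\<forall>i<n1. (\<lambda>k. f1 (r k) i) \<longlonglongrightarrow> L i"
  proof (intro allI impI)
    fix i assume "i < n1"
    then show "(\<lambda>k. f1 (r k) i) \<longlonglongrightarrow> L i" using r(2)[rule_format, of i] by (simp add: F_def)
  qed
  have 2: "\<forall>i<n2. (\<lambda>k. f2 (r k) i) \<longlonglongrightarrow> L (i + n1)"
  proof (intro allI impI)
    fix i assume "i < n2"
    then show "(\<lambda>k. f2 (r k) i) \<longlonglongrightarrow> L (i + n1)" using r(2)[rule_format, of "i + n1"] by (simp add: F_def)
  qed
  have 3: "\<forall>i<n3. (\<lambda>k. f3 (r k) i) \<longlonglongrightarrow> L (i + n1 + n2)"
  proof (intro allI impI)
    fix i assume "i < n3"
    then show "(\<lambda>k. f3 (r k) i) \<longlonglongrightarrow> L (i + n1 + n2)" using r(2)[rule_format, of "i + n1 + n2"] by (simp add: F_def)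
  qed
  have 4: "\<forall>i<n4. (\<lambda>k. f4 (r k) i) \<longlonglongrightarrow> L (i + n1 + n2 + n3)"
  proof (intro allI impI)
    fix i assume "i < n4"
    then show "(\<lambda>k. f4 (r k) i) \<longlonglongrightarrow> L (i + n1 + n2 + n3)" using r(2)[rule_format, of "i + n1 + n2 + n3"] by (simp add: F_def)
  qed
  show ?thesis
    apply (rule exI[of _ r], rule exI[of _ L], rule exI[of _ "\<lambda>i. L (i + n1)"],
        rule exI[of _ "\<lambda>i. L (i + n1 + n2)"], rule exI[of _ "\<lambda>i. L (i + n1 + n2 + n3)"])
    using r(1) 1 2 3 4 by blast
qed

lemma C1_der: "C1_fun \<phi> \<Longrightarrow> GDERIV \<phi> x :> grad \<phi> x"
  unfolding C1_fun_def by (blast intro: grad_works)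

lemma C1_tendsto:
  assumes "C1_fun \<phi>" "y \<longlonglongrightarrow> x" shows "(\<lambda>k. \<phi> (y k)) \<longlonglongrightarrow> \<phi> x"
proof -
  have "isCont \<phi> x" using assms(1) unfolding C1_fun_def
    by (blast intro: differentiable_imp_continuous_within)
  then show ?thesis using assms(2) by (rule isCont_tendsto_compose)
qed

lemma C1_grad_tendsto:
  assumes "C1_fun \<phi>" "y \<longlonglongrightarrow> x" shows "(\<lambda>k. grad \<phi> (y k)) \<longlonglongrightarrow> grad \<phi> x"
proof -
  have "isCont (grad \<phi>) x" using assms(1) unfolding C1_fun_def
    using continuous_on_eq_continuous_at open_UNIV by blast
  then show ?thesis using assms(2) by (rule isCont_tendsto_compose)
qed

lemma S_imp_B:
  fixes P :: "('a::euclidean_space) mpcc"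
  assumes df: "C1_fun (obj P)" and dg: "\<forall>i<ng P. C1_fun (gc P i)" and dh: "\<forall>i<nh P. C1_fun (hc P i)"
    and dG: "\<forall>i<mc P. C1_fun (Gc P i)" and dH: "\<forall>i<mc P. C1_fun (Hc P i)"
    and S: "S_stat_mult P z lg lh lG lH"
  shows "B_stationary P z"
proof -
  have feas: "mpcc_feasible P z" and lg: "\<forall>i\<in>Ig P z. 0 \<le> lg i"
    and eq: "grad (obj P) z + (\<Sum>i\<in>Ig P z. lg i *\<^sub>R grad (gc P i) z)
       + (\<Sum>i<nh P. lh i *\<^sub>R grad (hc P i) z)
       - (\<Sum>i\<in>alpha P z \<union> beta P z. lG i *\<^sub>R grad (Gc P i) z)
       - (\<Sum>i\<in>gamma P z \<union> beta P z. lH i *\<^sub>R grad (Hc P i) z) = 0"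
    and lGH: "\<forall>i\<in>beta P z. 0 \<le> lG i \<and> 0 \<le> lH i"
    using S unfolding S_stat_mult_def weak_stat_mult_def by auto
  show ?thesis unfolding B_stationary_def
  proof (intro conjI ballI feas)
    fix d assume "d \<in> tangent_cone (mpcc_set P) z"
    then obtain zs t where zsX: "\<forall>k. zs k \<in> mpcc_set P" and zs: "zs \<longlonglongrightarrow> z" and tpos: "\<forall>k. 0 < t k"
      and w: "(\<lambda>k. (1 / t k) *\<^sub>R (zs k - z)) \<longlonglongrightarrow> d"
      unfolding tangent_cone_def by blast
    have fk: "mpcc_feasible P (zs k)" for k using zsX by (simp add: mpcc_set_def)
    have c1: "grad (gc P i) z \<bullet> d \<le> 0" if "i \<in> Ig P z" for i
    proof -
      have i: "i < ng P" "gc P i z = 0" using that by (auto simp: Ig_def)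
      show ?thesis
        by (rule tangent_le[OF C1_der zs tpos w]) (use dg i fk in \<open>auto simp: mpcc_feasible_def\<close>)
    qed
    have c2: "grad (hc P i) z \<bullet> d = 0" if i: "i < nh P" for i
    proof -
      have h0: "hc P i z = 0" using feas i by (auto simp: mpcc_feasible_def)
      have "grad (hc P i) z \<bullet> d \<le> 0"
        by (rule tangent_le[OF C1_der zs tpos w]) (use dh i fk h0 in \<open>auto simp: mpcc_feasible_def\<close>)
      moreover have "0 \<le> grad (hc P i) z \<bullet> d"
        by (rule tangent_ge[OF C1_der zs tpos w]) (use dh i fk h0 in \<open>auto simp: mpcc_feasible_def\<close>)
      ultimately show ?thesis by simp
    qed
    have c3: "grad (Gc P i) z \<bullet> d = 0" if "i \<in> alpha P z" for i
    proof -
      have i: "i < mc P" "Gc P i z = 0" "0 < Hc P i z" using that by (auto simp: alpha_def)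
      have "(\<lambda>k. Hc P i (zs k)) \<longlonglongrightarrow> Hc P i z" using C1_tendsto dH i(1) zs by blast
      then have "eventually (\<lambda>k. 0 < Hc P i (zs k)) sequentially" using i(3) by (rule order_tendstoD)
      moreover have prod: "\<And>k. Gc P i (zs k) * Hc P i (zs k) = 0" using fk i(1) unfolding mpcc_feasible_def by blast
      ultimately have ev: "eventually (\<lambda>k. Gc P i (zs k) = 0) sequentially"
        by (auto elim!: eventually_mono) (metis order_less_irrefl)
      have "grad (Gc P i) z \<bullet> d \<le> 0"
        by (rule tangent_le[OF C1_der zs tpos w]) (use dG i ev in \<open>auto elim: eventually_mono\<close>)
      moreover have "0 \<le> grad (Gc P i) z \<bullet> d"
        by (rule tangent_ge[OF C1_der zs tpos w]) (use dG i ev in \<open>auto elim: eventually_mono\<close>)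
      ultimately show ?thesis by simp
    qed
    have c4: "grad (Hc P i) z \<bullet> d = 0" if "i \<in> gamma P z" for i
    proof -
      have i: "i < mc P" "Hc P i z = 0" "0 < Gc P i z" using that by (auto simp: gamma_def)
      have "(\<lambda>k. Gc P i (zs k)) \<longlonglongrightarrow> Gc P i z" using C1_tendsto dG i(1) zs by blast
      then have "eventually (\<lambda>k. 0 < Gc P i (zs k)) sequentially" using i(3) by (rule order_tendstoD)
      moreover have prod: "\<And>k. Gc P i (zs k) * Hc P i (zs k) = 0" using fk i(1) unfolding mpcc_feasible_def by blast
      ultimately have ev: "eventually (\<lambda>k. Hc P i (zs k) = 0) sequentially"
        by (auto elim!: eventually_mono) (metis order_less_irrefl)
      have "grad (Hc P i) z \<bullet> d \<le> 0"
        by (rule tangent_le[OF C1_der zs tpos w]) (use dH i ev in \<open>auto elim: eventually_mono\<close>)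
      moreover have "0 \<le> grad (Hc P i) z \<bullet> d"
        by (rule tangent_ge[OF C1_der zs tpos w]) (use dH i ev in \<open>auto elim: eventually_mono\<close>)
      ultimately show ?thesis by simp
    qed
    have c5: "0 \<le> grad (Gc P i) z \<bullet> d \<and> 0 \<le> grad (Hc P i) z \<bullet> d" if "i \<in> beta P z" for i
    proof -
      have i: "i < mc P" "Hc P i z = 0" "Gc P i z = 0" using that by (auto simp: beta_def)
      have "0 \<le> grad (Gc P i) z \<bullet> d"
        by (rule tangent_ge[OF C1_der zs tpos w]) (use dG i fk in \<open>auto simp: mpcc_feasible_def\<close>)
      moreover have "0 \<le> grad (Hc P i) z \<bullet> d"
        by (rule tangent_ge[OF C1_der zs tpos w]) (use dH i fk in \<open>auto simp: mpcc_feasible_def\<close>)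
      ultimately show ?thesis by simp
    qed
    define S1 where "S1 = (\<Sum>i\<in>Ig P z. lg i * (grad (gc P i) z \<bullet> d))"
    define S2 where "S2 = (\<Sum>i<nh P. lh i * (grad (hc P i) z \<bullet> d))"
    define S3 where "S3 = (\<Sum>i\<in>alpha P z \<union> beta P z. lG i * (grad (Gc P i) z \<bullet> d))"
    define S4 where "S4 = (\<Sum>i\<in>gamma P z \<union> beta P z. lH i * (grad (Hc P i) z \<bullet> d))"
    have "(grad (obj P) z + (\<Sum>i\<in>Ig P z. lg i *\<^sub>R grad (gc P i) z)
       + (\<Sum>i<nh P. lh i *\<^sub>R grad (hc P i) z)
       - (\<Sum>i\<in>alpha P z \<union> beta P z. lG i *\<^sub>R grad (Gc P i) z)
       - (\<Sum>i\<in>gamma P z \<union> beta P z. lH i *\<^sub>R grad (Hc P i) z)) \<bullet> d = 0"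
      using eq by simp
    then have key: "grad (obj P) z \<bullet> d + S1 + S2 - S3 - S4 = 0"
      unfolding S1_def S2_def S3_def S4_def
      by (simp add: inner_add_left inner_diff_left inner_sum_left)
    have "S1 \<le> 0" unfolding S1_def
      by (rule sum_nonpos) (use lg c1 in \<open>auto intro: mult_nonneg_nonpos\<close>)
    moreover have "S2 = 0" unfolding S2_def using c2 by simp
    moreover have "0 \<le> S3" unfolding S3_def
    proof (rule sum_nonneg)
      fix i assume "i \<in> alpha P z \<union> beta P z"
      then show "0 \<le> lG i * (grad (Gc P i) z \<bullet> d)" using c3 c5 lGH by auto
    qed
    moreover have "0 \<le> S4" unfolding S4_def
    proof (rule sum_nonneg)
      fix i assume "i \<in> gamma P z \<union> beta P z"
      then show "0 \<le> lH i * (grad (Hc P i) z \<bullet> d)" using c4 c5 lGH by auto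
    qed
    ultimately show "0 \<le> grad (obj P) z \<bullet> d" using key by linarith
  qed
qed

definition acoef :: "real \<Rightarrow> ('a::euclidean_space) mpcc \<Rightarrow> nat \<Rightarrow> 'a \<Rightarrow> real" where
  "acoef e P i x = (1 - (Gc P i x - Hc P i x) / sqrt ((Gc P i x - Hc P i x)\<^sup>2 + e\<^sup>2)) / 2"

lemma ratio_bnd: "\<bar>(a::real) / sqrt (a\<^sup>2 + b\<^sup>2)\<bar> \<le> 1"
proof (cases "sqrt (a\<^sup>2 + b\<^sup>2) = 0")
  case True then show ?thesis by simp
next
  case False
  have "\<bar>a\<bar> = sqrt (a\<^sup>2)" by simp
  also have "\<dots> \<le> sqrt (a\<^sup>2 + b\<^sup>2)" by (rule real_sqrt_le_mono) simp
  finally have "\<bar>a\<bar> \<le> sqrt (a\<^sup>2 + b\<^sup>2)" .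
  moreover have "0 \<le> sqrt (a\<^sup>2 + b\<^sup>2)" by simp
  then have "0 < sqrt (a\<^sup>2 + b\<^sup>2)" using False by linarith
  ultimately show ?thesis by (simp add: abs_divide)
qed

lemma half_bnd: "\<bar>q::real\<bar> \<le> 1 \<Longrightarrow> 0 \<le> (1 - q) / 2 \<and> (1 - q) / 2 \<le> 1"
  by (auto simp: abs_le_iff)

lemma acoef_bnd: "0 \<le> acoef e P i x \<and> acoef e P i x \<le> 1"
  unfolding acoef_def by (rule half_bnd[OF ratio_bnd])

lemma lim_evzero:
  fixes X :: "nat \<Rightarrow> real"
  assumes "X \<longlonglongrightarrow> L" "\<forall>k\<ge>N. X k = 0" shows "L = 0"
proof -
  have "X \<longlonglongrightarrow> 0" by (rule tendsto_eventually) (use assms(2) in \<open>auto simp: eventually_sequentially\<close>)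
  then show ?thesis using assms(1) LIMSEQ_unique by blast
qed

locale mpcc_alg =
  fixes P :: "('a::euclidean_space) mpcc" and \<kappa> :: real and eps :: "nat \<Rightarrow> real"
    and p :: "nat \<Rightarrow> nat \<Rightarrow> real" and z :: "nat \<Rightarrow> 'a" and zbar :: 'a
    and ug uh uP :: "nat \<Rightarrow> nat \<Rightarrow> real"
  assumes df: "C1_fun (obj P)"
    and dg: "\<forall>i<ng P. C1_fun (gc P i)"
    and dh: "\<forall>i<nh P. C1_fun (hc P i)"
    and dG: "\<forall>i<mc P. C1_fun (Gc P i)"
    and dH: "\<forall>i<mc P. C1_fun (Hc P i)"
    and alg: "bounding_alg P \<kappa> eps p z ug uh uP"
    and zlim: "z \<longlonglongrightarrow> zbar"
    and mfcq: "MPCC_MFCQ P zbar"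
begin

lemma eps_eq: "eps k = \<kappa> ^ k * eps 0"
proof -
  have e: "\<forall>k. eps (Suc k) = \<kappa> * eps k" using alg unfolding bounding_alg_def by blast
  show ?thesis by (induction k) (simp_all add: e)
qed

lemma eps_pos: "0 < eps k"
proof -
  have "0 < eps 0" "0 < \<kappa>" using alg unfolding bounding_alg_def by blast+
  then show ?thesis by (subst eps_eq) simp
qed

lemma eps_lim: "eps \<longlonglongrightarrow> 0"
proof -
  have "(\<lambda>k. \<kappa> ^ k * eps 0) \<longlonglongrightarrow> 0 * eps 0"
    using alg unfolding bounding_alg_def by (intro tendsto_intros LIMSEQ_power_zero) auto
  then have l: "(\<lambda>k. \<kappa> ^ k * eps 0) \<longlonglongrightarrow> 0" by simp
  have e: "eps = (\<lambda>k. \<kappa> ^ k * eps 0)" by (rule ext) (rule eps_eq)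
  show ?thesis using l by (subst e)
qed

lemma p_bnd: "0 \<le> p k i \<and> p k i \<le> eps k / 2"
proof (induction k)
  case 0 then show ?case using alg eps_pos[of 0] unfolding bounding_alg_def by auto
next
  case (Suc k)
  have rec: "p (Suc k) i = (if p k i = 0 \<and> 0 < uP k i then eps (Suc k) / 2
         else if p k i = eps k / 2 \<and> uP k i < 0 then 0 else \<kappa> * p k i)"
    and e: "eps (Suc k) = \<kappa> * eps k" and kp: "0 < \<kappa>"
    using alg unfolding bounding_alg_def by auto
  have "0 \<le> \<kappa> * p k i" using Suc kp by simp
  moreover have "\<kappa> * p k i \<le> eps (Suc k) / 2" unfolding e using Suc kp by simp
  ultimately show ?case using rec eps_pos[of "Suc k"] by auto
qed

lemma p_lim: "(\<lambda>k. p k i) \<longlonglongrightarrow> 0"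
proof (rule tendsto_sandwich[of "\<lambda>k. 0" _ _ "\<lambda>k. eps k / 2"])
  show "(\<lambda>k. eps k / 2) \<longlonglongrightarrow> 0" using eps_lim by (intro tendsto_eq_intros) auto
qed (use p_bnd in auto)

lemma KKT: "BA_KKT (eps k) (p k) P (z k) (ug k) (uh k) (uP k)"
  using alg unfolding bounding_alg_def by auto

lemma kkt_rw:
  "grad (obj P) (z k) + (\<Sum>i<ng P. ug k i *\<^sub>R grad (gc P i) (z k))
     + (\<Sum>i<nh P. uh k i *\<^sub>R grad (hc P i) (z k))
     - (\<Sum>i<mc P. uP k i *\<^sub>R (acoef (eps k) P i (z k) *\<^sub>R grad (Gc P i) (z k)
          + (1 - acoef (eps k) P i (z k)) *\<^sub>R grad (Hc P i) (z k))) = 0"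
proof -
  have K: "(\<forall>i<ng P. i \<notin> Ig P (z k) \<longrightarrow> ug k i = 0)"
    "grad (obj P) (z k) + (\<Sum>i\<in>Ig P (z k). ug k i *\<^sub>R grad (gc P i) (z k))
       + (\<Sum>i<nh P. uh k i *\<^sub>R grad (hc P i) (z k))
       - (\<Sum>i<mc P. uP k i *\<^sub>R grad (Phi (eps k) P i) (z k)) = 0"
    using KKT[of k] unfolding BA_KKT_def by auto
  have s1: "(\<Sum>i\<in>Ig P (z k). ug k i *\<^sub>R grad (gc P i) (z k)) = (\<Sum>i<ng P. ug k i *\<^sub>R grad (gc P i) (z k))"
    by (rule sum.mono_neutral_left) (use K(1) in \<open>auto simp: Ig_def\<close>)
  have s2: "(\<Sum>i<mc P. uP k i *\<^sub>R grad (Phi (eps k) P i) (z k)) =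
     (\<Sum>i<mc P. uP k i *\<^sub>R (acoef (eps k) P i (z k) *\<^sub>R grad (Gc P i) (z k)
          + (1 - acoef (eps k) P i (z k)) *\<^sub>R grad (Hc P i) (z k)))"
  proof (rule sum.cong[OF refl])
    fix i assume "i \<in> {..<mc P}"
    then have "Gc P i differentiable (at (z k))" "Hc P i differentiable (at (z k))"
      using dG dH unfolding C1_fun_def by auto
    from grad_Phi[OF this] eps_pos[of k]
    show "uP k i *\<^sub>R grad (Phi (eps k) P i) (z k) = uP k i *\<^sub>R (acoef (eps k) P i (z k) *\<^sub>R grad (Gc P i) (z k)
          + (1 - acoef (eps k) P i (z k)) *\<^sub>R grad (Hc P i) (z k))"
      unfolding acoef_def by simp
  qed
  show ?thesis using K(2) unfolding s1 s2 .
qed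

lemma zbar_feas: "mpcc_feasible P zbar"
proof -
  have BF: "BA_feasible (eps k) (p k) P (z k)" for k using KKT[of k] unfolding BA_KKT_def by blast
  have g: "gc P i zbar \<le> 0" if i: "i < ng P" for i
  proof (rule tendsto_upperbound[OF C1_tendsto[OF _ zlim]])
    show "C1_fun (gc P i)" using dg i by blast
    show "\<forall>\<^sub>F k in sequentially. gc P i (z k) \<le> 0" using BF i unfolding BA_feasible_def by auto
  qed simp
  have h: "hc P i zbar = 0" if i: "i < nh P" for i
  proof -
    have "(\<lambda>k. hc P i (z k)) \<longlonglongrightarrow> hc P i zbar" using C1_tendsto[OF _ zlim] dh i by blast
    moreover have "(\<lambda>k. hc P i (z k)) = (\<lambda>k. 0)" using BF i unfolding BA_feasible_def by auto
    ultimately show ?thesis using LIMSEQ_unique tendsto_const by metis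
  qed
  have c: "0 \<le> Gc P i zbar \<and> 0 \<le> Hc P i zbar \<and> Gc P i zbar * Hc P i zbar = 0" if i: "i < mc P" for i
  proof -
    have G: "(\<lambda>k. Gc P i (z k)) \<longlonglongrightarrow> Gc P i zbar" using C1_tendsto[OF _ zlim] dG i by blast
    have H: "(\<lambda>k. Hc P i (z k)) \<longlonglongrightarrow> Hc P i zbar" using C1_tendsto[OF _ zlim] dH i by blast
    have "(\<lambda>k. Phi (eps k) P i (z k)) \<longlonglongrightarrow>
        (Gc P i zbar + Hc P i zbar - sqrt ((Gc P i zbar - Hc P i zbar)\<^sup>2 + 0\<^sup>2)) / 2"
      unfolding Phi_def by (intro tendsto_intros G H eps_lim) simp
    moreover have "(\<lambda>k. Phi (eps k) P i (z k)) = (\<lambda>k. - p k i)"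
      using BF i unfolding BA_feasible_def by (auto simp: fun_eq_iff add_eq_0_iff)
    moreover have "(\<lambda>k. - p k i) \<longlonglongrightarrow> - 0" by (intro tendsto_intros p_lim)
    ultimately have "(Gc P i zbar + Hc P i zbar - sqrt ((Gc P i zbar - Hc P i zbar)\<^sup>2 + 0\<^sup>2)) / 2 = 0"
      using LIMSEQ_unique by fastforce
    then have "Gc P i zbar + Hc P i zbar = \<bar>Gc P i zbar - Hc P i zbar\<bar>" by simp
    then show ?thesis by (cases "Gc P i zbar \<le> Hc P i zbar") auto
  qed
  show ?thesis unfolding mpcc_feasible_def using g h c by blast
qed

lemma ug_evzero:
  assumes "i < ng P" "i \<notin> Ig P zbar" shows "\<exists>N. \<forall>k\<ge>N. ug k i = 0"
proof -
  have "gc P i zbar < 0" using zbar_feas assms unfolding mpcc_feasible_def Ig_def by force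
  moreover have "(\<lambda>k. gc P i (z k)) \<longlonglongrightarrow> gc P i zbar" using C1_tendsto[OF _ zlim] dg assms(1) by blast
  ultimately have "eventually (\<lambda>k. gc P i (z k) < 0) sequentially" by (simp add: order_tendstoD(2))
  moreover have "ug k i = 0" if "gc P i (z k) < 0" for k
    using KKT[of k] assms(1) that unfolding BA_KKT_def Ig_def by auto
  ultimately show ?thesis by (auto simp: eventually_sequentially)
qed

lemma acoef_lim:
  assumes i: "i < mc P" and ne: "Gc P i zbar \<noteq> Hc P i zbar"
  shows "(\<lambda>k. acoef (eps k) P i (z k)) \<longlonglongrightarrow>
     (1 - (Gc P i zbar - Hc P i zbar) / sqrt ((Gc P i zbar - Hc P i zbar)\<^sup>2 + 0\<^sup>2)) / 2"
proof -
  have G: "(\<lambda>k. Gc P i (z k)) \<longlonglongrightarrow> Gc P i zbar" using C1_tendsto[OF _ zlim] dG i by blast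
  have H: "(\<lambda>k. Hc P i (z k)) \<longlonglongrightarrow> Hc P i zbar" using C1_tendsto[OF _ zlim] dH i by blast
  have nz: "sqrt ((Gc P i zbar - Hc P i zbar)\<^sup>2 + 0\<^sup>2) \<noteq> 0" using ne by simp
  show ?thesis unfolding acoef_def by (intro tendsto_intros G H eps_lim nz) simp
qed

lemma acoef_alpha:
  assumes "i \<in> alpha P zbar" "strict_mono r" "(\<lambda>k. acoef (eps (r k)) P i (z (r k))) \<longlonglongrightarrow> th"
  shows "th = 1"
proof -
  have i: "i < mc P" "Gc P i zbar - Hc P i zbar < 0" using assms(1) unfolding alpha_def by auto
  define x where "x = Gc P i zbar - Hc P i zbar"
  have "sqrt (x\<^sup>2 + 0\<^sup>2) = - x" using i(2) unfolding x_def by simp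
  moreover have "x / (- x) = -1" using i(2) unfolding x_def by (simp add: divide_eq_minus_1_iff)
  ultimately have v: "(1 - x / sqrt (x\<^sup>2 + 0\<^sup>2)) / 2 = 1" by simp
  have "(\<lambda>k. acoef (eps k) P i (z k)) \<longlonglongrightarrow> 1"
    using acoef_lim[OF i(1)] i(2) v unfolding x_def by simp
  from LIMSEQ_subseq_LIMSEQ[OF this assms(2)] have "(\<lambda>k. acoef (eps (r k)) P i (z (r k))) \<longlonglongrightarrow> 1"
    by (simp add: o_def)
  then show ?thesis using assms(3) LIMSEQ_unique by blast
qed

lemma acoef_gamma:
  assumes "i \<in> gamma P zbar" "strict_mono r" "(\<lambda>k. acoef (eps (r k)) P i (z (r k))) \<longlonglongrightarrow> th"
  shows "th = 0"
proof -
  have i: "i < mc P" "Gc P i zbar - Hc P i zbar > 0" using assms(1) unfolding gamma_def by auto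
  define x where "x = Gc P i zbar - Hc P i zbar"
  have "sqrt (x\<^sup>2 + 0\<^sup>2) = x" using i(2) unfolding x_def by simp
  moreover have "x / x = 1" using i(2) unfolding x_def by simp
  ultimately have v: "(1 - x / sqrt (x\<^sup>2 + 0\<^sup>2)) / 2 = 0" by simp
  have "(\<lambda>k. acoef (eps k) P i (z k)) \<longlonglongrightarrow> 0"
    using acoef_lim[OF i(1)] i(2) v unfolding x_def by simp
  from LIMSEQ_subseq_LIMSEQ[OF this assms(2)] have "(\<lambda>k. acoef (eps (r k)) P i (z (r k))) \<longlonglongrightarrow> 0"
    by (simp add: o_def)
  then show ?thesis using assms(3) LIMSEQ_unique by blast
qed

end

context mpcc_alg begin

lemma limit_eq:
  assumes r: "strict_mono r" and c: "c \<longlonglongrightarrow> c0"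
    and Lg: "\<forall>i<ng P. (\<lambda>k. ug (r k) i * c k) \<longlonglongrightarrow> Lg i"
    and Lh: "\<forall>i<nh P. (\<lambda>k. uh (r k) i * c k) \<longlonglongrightarrow> Lh i"
    and LP: "\<forall>i<mc P. (\<lambda>k. uP (r k) i * c k) \<longlonglongrightarrow> LP i"
    and th: "\<forall>i<mc P. (\<lambda>k. acoef (eps (r k)) P i (z (r k))) \<longlonglongrightarrow> \<theta> i"
  shows "c0 *\<^sub>R grad (obj P) zbar + (\<Sum>i<ng P. Lg i *\<^sub>R grad (gc P i) zbar)
     + (\<Sum>i<nh P. Lh i *\<^sub>R grad (hc P i) zbar)
     - (\<Sum>i<mc P. LP i *\<^sub>R (\<theta> i *\<^sub>R grad (Gc P i) zbar + (1 - \<theta> i) *\<^sub>R grad (Hc P i) zbar)) = 0"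
proof -
  have y: "(\<lambda>k. z (r k)) \<longlonglongrightarrow> zbar" using LIMSEQ_subseq_LIMSEQ[OF zlim r] by (simp add: o_def)
  define A where "A k = grad (obj P) (z (r k))" for k
  define B where "B k = (\<Sum>i<ng P. ug (r k) i *\<^sub>R grad (gc P i) (z (r k)))" for k
  define C where "C k = (\<Sum>i<nh P. uh (r k) i *\<^sub>R grad (hc P i) (z (r k)))" for k
  define D where "D k = (\<Sum>i<mc P. uP (r k) i *\<^sub>R (acoef (eps (r k)) P i (z (r k)) *\<^sub>R grad (Gc P i) (z (r k))
          + (1 - acoef (eps (r k)) P i (z (r k))) *\<^sub>R grad (Hc P i) (z (r k))))" for k
  have S0: "c k *\<^sub>R A k + c k *\<^sub>R B k + c k *\<^sub>R C k - c k *\<^sub>R D k = 0" for k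
  proof -
    have "A k + B k + C k - D k = 0" unfolding A_def B_def C_def D_def by (rule kkt_rw)
    then have "c k *\<^sub>R (A k + B k + C k - D k) = 0" by simp
    then show ?thesis by (simp add: scaleR_add_right scaleR_diff_right)
  qed
  have tA: "(\<lambda>k. c k *\<^sub>R A k) \<longlonglongrightarrow> c0 *\<^sub>R grad (obj P) zbar"
    unfolding A_def by (intro tendsto_intros c C1_grad_tendsto[OF df y])
  have tB: "(\<lambda>k. c k *\<^sub>R B k) \<longlonglongrightarrow> (\<Sum>i<ng P. Lg i *\<^sub>R grad (gc P i) zbar)"
  proof -
    have "(\<lambda>k. c k *\<^sub>R B k) = (\<lambda>k. \<Sum>i<ng P. (ug (r k) i * c k) *\<^sub>R grad (gc P i) (z (r k)))"
      unfolding B_def by (simp add: scaleR_sum_right mult.commute)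
    moreover have "(\<lambda>k. \<Sum>i<ng P. (ug (r k) i * c k) *\<^sub>R grad (gc P i) (z (r k))) \<longlonglongrightarrow> (\<Sum>i<ng P. Lg i *\<^sub>R grad (gc P i) zbar)"
    proof (rule tendsto_sum)
      fix i assume "i \<in> {..<ng P}"
      then show "(\<lambda>k. (ug (r k) i * c k) *\<^sub>R grad (gc P i) (z (r k))) \<longlonglongrightarrow> Lg i *\<^sub>R grad (gc P i) zbar"
        using Lg dg by (intro tendsto_intros C1_grad_tendsto[OF _ y]) auto
    qed
    ultimately show ?thesis by simp
  qed
  have tC: "(\<lambda>k. c k *\<^sub>R C k) \<longlonglongrightarrow> (\<Sum>i<nh P. Lh i *\<^sub>R grad (hc P i) zbar)"
  proof -
    have "(\<lambda>k. c k *\<^sub>R C k) = (\<lambda>k. \<Sum>i<nh P. (uh (r k) i * c k) *\<^sub>R grad (hc P i) (z (r k)))"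
      unfolding C_def by (simp add: scaleR_sum_right mult.commute)
    moreover have "(\<lambda>k. \<Sum>i<nh P. (uh (r k) i * c k) *\<^sub>R grad (hc P i) (z (r k))) \<longlonglongrightarrow> (\<Sum>i<nh P. Lh i *\<^sub>R grad (hc P i) zbar)"
    proof (rule tendsto_sum)
      fix i assume "i \<in> {..<nh P}"
      then show "(\<lambda>k. (uh (r k) i * c k) *\<^sub>R grad (hc P i) (z (r k))) \<longlonglongrightarrow> Lh i *\<^sub>R grad (hc P i) zbar"
        using Lh dh by (intro tendsto_intros C1_grad_tendsto[OF _ y]) auto
    qed
    ultimately show ?thesis by simp
  qed
  have tD: "(\<lambda>k. c k *\<^sub>R D k) \<longlonglongrightarrow> (\<Sum>i<mc P. LP i *\<^sub>R (\<theta> i *\<^sub>R grad (Gc P i) zbar + (1 - \<theta> i) *\<^sub>R grad (Hc P i) zbar))"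
  proof -
    have "(\<lambda>k. c k *\<^sub>R D k) = (\<lambda>k. \<Sum>i<mc P. (uP (r k) i * c k) *\<^sub>R (acoef (eps (r k)) P i (z (r k)) *\<^sub>R grad (Gc P i) (z (r k))
          + (1 - acoef (eps (r k)) P i (z (r k))) *\<^sub>R grad (Hc P i) (z (r k))))"
      unfolding D_def by (simp add: scaleR_sum_right mult.commute)
    moreover have "(\<lambda>k. \<Sum>i<mc P. (uP (r k) i * c k) *\<^sub>R (acoef (eps (r k)) P i (z (r k)) *\<^sub>R grad (Gc P i) (z (r k))
          + (1 - acoef (eps (r k)) P i (z (r k))) *\<^sub>R grad (Hc P i) (z (r k))))
        \<longlonglongrightarrow> (\<Sum>i<mc P. LP i *\<^sub>R (\<theta> i *\<^sub>R grad (Gc P i) zbar + (1 - \<theta> i) *\<^sub>R grad (Hc P i) zbar))"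
    proof (rule tendsto_sum)
      fix i assume "i \<in> {..<mc P}"
      then show "(\<lambda>k. (uP (r k) i * c k) *\<^sub>R (acoef (eps (r k)) P i (z (r k)) *\<^sub>R grad (Gc P i) (z (r k))
          + (1 - acoef (eps (r k)) P i (z (r k))) *\<^sub>R grad (Hc P i) (z (r k))))
        \<longlonglongrightarrow> LP i *\<^sub>R (\<theta> i *\<^sub>R grad (Gc P i) zbar + (1 - \<theta> i) *\<^sub>R grad (Hc P i) zbar)"
        using LP th dG dH by (intro tendsto_intros C1_grad_tendsto[OF _ y]) auto
    qed
    ultimately show ?thesis by simp
  qed
  have "(\<lambda>k. c k *\<^sub>R A k + c k *\<^sub>R B k + c k *\<^sub>R C k - c k *\<^sub>R D k) \<longlonglongrightarrow>
     c0 *\<^sub>R grad (obj P) zbar + (\<Sum>i<ng P. Lg i *\<^sub>R grad (gc P i) zbar)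
     + (\<Sum>i<nh P. Lh i *\<^sub>R grad (hc P i) zbar)
     - (\<Sum>i<mc P. LP i *\<^sub>R (\<theta> i *\<^sub>R grad (Gc P i) zbar + (1 - \<theta> i) *\<^sub>R grad (Hc P i) zbar))"
    by (intro tendsto_intros tA tB tC tD)
  moreover have "(\<lambda>k. c k *\<^sub>R A k + c k *\<^sub>R B k + c k *\<^sub>R C k - c k *\<^sub>R D k) \<longlonglongrightarrow> 0"
    unfolding S0 by simp
  ultimately show ?thesis using LIMSEQ_unique by blast
qed

lemma sum_Ig:
  assumes "\<forall>i<ng P. i \<notin> Ig P zbar \<longrightarrow> L i = 0"
  shows "(\<Sum>i<ng P. L i *\<^sub>R grad (gc P i) zbar) = (\<Sum>i\<in>Ig P zbar. L i *\<^sub>R grad (gc P i) zbar)"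
proof (rule sum.mono_neutral_right)
  show "Ig P zbar \<subseteq> {..<ng P}" unfolding Ig_def by blast
  show "\<forall>i\<in>{..<ng P} - Ig P zbar. L i *\<^sub>R grad (gc P i) zbar = 0"
  proof
    fix i assume "i \<in> {..<ng P} - Ig P zbar"
    then have "L i = 0" using assms by blast
    then show "L i *\<^sub>R grad (gc P i) zbar = 0" by simp
  qed
qed simp

lemma split_Phi:
  assumes ta: "\<forall>i\<in>alpha P zbar. \<theta> i = 1" and tg: "\<forall>i\<in>gamma P zbar. \<theta> i = 0"
  shows "(\<Sum>i<mc P. L i *\<^sub>R (\<theta> i *\<^sub>R grad (Gc P i) zbar + (1 - \<theta> i) *\<^sub>R grad (Hc P i) zbar))
    = (\<Sum>i\<in>alpha P zbar \<union> beta P zbar. (L i * \<theta> i) *\<^sub>R grad (Gc P i) zbar)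
      + (\<Sum>i\<in>gamma P zbar \<union> beta P zbar. (L i * (1 - \<theta> i)) *\<^sub>R grad (Hc P i) zbar)"
proof -
  have part: "i \<in> alpha P zbar \<or> i \<in> beta P zbar \<or> i \<in> gamma P zbar" if "i < mc P" for i
  proof -
    have f: "0 \<le> Gc P i zbar" "0 \<le> Hc P i zbar" "Gc P i zbar * Hc P i zbar = 0"
      using zbar_feas that unfolding mpcc_feasible_def by blast+
    then have "Gc P i zbar = 0 \<or> Hc P i zbar = 0" by simp
    then show ?thesis using f(1,2) that unfolding alpha_def beta_def gamma_def by force
  qed
  have "(\<Sum>i<mc P. L i *\<^sub>R (\<theta> i *\<^sub>R grad (Gc P i) zbar + (1 - \<theta> i) *\<^sub>R grad (Hc P i) zbar))
     = (\<Sum>i<mc P. (L i * \<theta> i) *\<^sub>R grad (Gc P i) zbar) + (\<Sum>i<mc P. (L i * (1 - \<theta> i)) *\<^sub>R grad (Hc P i) zbar)"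
    by (simp add: sum.distrib scaleR_add_right)
  also have "(\<Sum>i<mc P. (L i * \<theta> i) *\<^sub>R grad (Gc P i) zbar) = (\<Sum>i\<in>alpha P zbar \<union> beta P zbar. (L i * \<theta> i) *\<^sub>R grad (Gc P i) zbar)"
  proof (rule sum.mono_neutral_right)
    show "\<forall>i\<in>{..<mc P} - (alpha P zbar \<union> beta P zbar). (L i * \<theta> i) *\<^sub>R grad (Gc P i) zbar = 0"
      using part tg by auto
  qed (auto simp: alpha_def beta_def)
  also have "(\<Sum>i<mc P. (L i * (1 - \<theta> i)) *\<^sub>R grad (Hc P i) zbar) = (\<Sum>i\<in>gamma P zbar \<union> beta P zbar. (L i * (1 - \<theta> i)) *\<^sub>R grad (Hc P i) zbar)"
  proof (rule sum.mono_neutral_right)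
    show "\<forall>i\<in>{..<mc P} - (gamma P zbar \<union> beta P zbar). (L i * (1 - \<theta> i)) *\<^sub>R grad (Hc P i) zbar = 0"
      using part ta by auto
  qed (auto simp: gamma_def beta_def)
  finally show ?thesis .
qed


lemma mc_part:
  assumes "i < mc P" shows "i \<in> alpha P zbar \<or> i \<in> beta P zbar \<or> i \<in> gamma P zbar"
proof -
  have f: "0 \<le> Gc P i zbar" "0 \<le> Hc P i zbar" "Gc P i zbar * Hc P i zbar = 0"
    using zbar_feas assms unfolding mpcc_feasible_def by blast+
  then have "Gc P i zbar = 0 \<or> Hc P i zbar = 0" by simp
  then show ?thesis using f(1,2) assms unfolding alpha_def beta_def gamma_def by force
qed

lemma mfcq_zero:
  assumes wg0: "\<forall>i<ng P. 0 \<le> wg i" and wgI: "\<forall>i<ng P. i \<notin> Ig P zbar \<longrightarrow> wg i = 0"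
    and ta: "\<forall>i\<in>alpha P zbar. \<theta> i = 1" and tg: "\<forall>i\<in>gamma P zbar. \<theta> i = 0"
    and eq: "(\<Sum>i<ng P. wg i *\<^sub>R grad (gc P i) zbar) + (\<Sum>i<nh P. wh i *\<^sub>R grad (hc P i) zbar)
      - (\<Sum>i<mc P. wP i *\<^sub>R (\<theta> i *\<^sub>R grad (Gc P i) zbar + (1 - \<theta> i) *\<^sub>R grad (Hc P i) zbar)) = 0"
  shows "(\<forall>i<ng P. wg i = 0) \<and> (\<forall>i<nh P. wh i = 0) \<and> (\<forall>i<mc P. wP i = 0)"
proof -
  define SG where "SG = (\<Sum>i\<in>alpha P zbar \<union> beta P zbar. (wP i * \<theta> i) *\<^sub>R grad (Gc P i) zbar)"
  define SH where "SH = (\<Sum>i\<in>gamma P zbar \<union> beta P zbar. (wP i * (1 - \<theta> i)) *\<^sub>R grad (Hc P i) zbar)"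
  have eq2: "(\<Sum>i\<in>Ig P zbar. wg i *\<^sub>R grad (gc P i) zbar) + (\<Sum>i<nh P. wh i *\<^sub>R grad (hc P i) zbar)
      - SG - SH = 0"
    using eq unfolding sum_Ig[OF wgI] split_Phi[OF ta tg] SG_def SH_def by (simp add: algebra_simps)
  obtain d where d: "\<forall>i<nh P. grad (hc P i) zbar \<bullet> d = 0"
    "\<forall>i\<in>alpha P zbar \<union> beta P zbar. grad (Gc P i) zbar \<bullet> d = 0"
    "\<forall>i\<in>gamma P zbar \<union> beta P zbar. grad (Hc P i) zbar \<bullet> d = 0"
    "\<forall>i\<in>Ig P zbar. grad (gc P i) zbar \<bullet> d < 0"
    using mfcq unfolding MPCC_MFCQ_def by blast
  have LI: "\<And>ch cG cH. (\<Sum>i<nh P. ch i *\<^sub>R grad (hc P i) zbar)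
        + (\<Sum>i\<in>alpha P zbar \<union> beta P zbar. cG i *\<^sub>R grad (Gc P i) zbar)
        + (\<Sum>i\<in>gamma P zbar \<union> beta P zbar. cH i *\<^sub>R grad (Hc P i) zbar) = 0 \<Longrightarrow>
        (\<forall>i<nh P. ch i = 0) \<and> (\<forall>i\<in>alpha P zbar \<union> beta P zbar. cG i = 0) \<and>
        (\<forall>i\<in>gamma P zbar \<union> beta P zbar. cH i = 0)"
    using mfcq unfolding MPCC_MFCQ_def by blast
  have "((\<Sum>i\<in>Ig P zbar. wg i *\<^sub>R grad (gc P i) zbar) + (\<Sum>i<nh P. wh i *\<^sub>R grad (hc P i) zbar)
      - SG - SH) \<bullet> d = 0" using eq2 by simp
  then have i1: "(\<Sum>i\<in>Ig P zbar. wg i * (grad (gc P i) zbar \<bullet> d)) + (\<Sum>i<nh P. wh i * (grad (hc P i) zbar \<bullet> d))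
      - (\<Sum>i\<in>alpha P zbar \<union> beta P zbar. (wP i * \<theta> i) * (grad (Gc P i) zbar \<bullet> d))
      - (\<Sum>i\<in>gamma P zbar \<union> beta P zbar. (wP i * (1 - \<theta> i)) * (grad (Hc P i) zbar \<bullet> d)) = 0"
    unfolding SG_def SH_def by (simp add: inner_add_left inner_diff_left inner_sum_left)
  have "(\<Sum>i<nh P. wh i * (grad (hc P i) zbar \<bullet> d)) = 0" using d(1) by simp
  moreover have "(\<Sum>i\<in>alpha P zbar \<union> beta P zbar. (wP i * \<theta> i) * (grad (Gc P i) zbar \<bullet> d)) = 0"
    using d(2) by simp
  moreover have "(\<Sum>i\<in>gamma P zbar \<union> beta P zbar. (wP i * (1 - \<theta> i)) * (grad (Hc P i) zbar \<bullet> d)) = 0"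
    using d(3) by simp
  ultimately have s0: "(\<Sum>i\<in>Ig P zbar. wg i * (grad (gc P i) zbar \<bullet> d)) = 0" using i1 by simp
  have finI: "finite (Ig P zbar)" by (rule finite_subset[of _ "{..<ng P}"]) (auto simp: Ig_def)
  have nn: "\<forall>i\<in>Ig P zbar. 0 \<le> - (wg i * (grad (gc P i) zbar \<bullet> d))"
  proof
    fix i assume i: "i \<in> Ig P zbar"
    then have "0 \<le> wg i" using wg0 by (simp add: Ig_def)
    moreover have "grad (gc P i) zbar \<bullet> d < 0" using d(4) i by blast
    ultimately show "0 \<le> - (wg i * (grad (gc P i) zbar \<bullet> d))"
      by (simp add: mult_nonneg_nonpos)
  qed
  have z1: "(\<Sum>i\<in>Ig P zbar. - (wg i * (grad (gc P i) zbar \<bullet> d))) = 0" using s0 by (simp add: sum_negf)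
  have z2: "(\<Sum>i\<in>Ig P zbar. - (wg i * (grad (gc P i) zbar \<bullet> d))) = 0 \<longleftrightarrow>
      (\<forall>i\<in>Ig P zbar. - (wg i * (grad (gc P i) zbar \<bullet> d)) = 0)"
    by (rule sum_nonneg_eq_0_iff[OF finI]) (use nn in blast)
  have z3: "\<forall>i\<in>Ig P zbar. - (wg i * (grad (gc P i) zbar \<bullet> d)) = 0" using z1 z2 by blast
  have wgIz: "\<forall>i\<in>Ig P zbar. wg i = 0"
  proof
    fix i assume i: "i \<in> Ig P zbar"
    then have "wg i * (grad (gc P i) zbar \<bullet> d) = 0" using z3 by simp
    moreover have "grad (gc P i) zbar \<bullet> d \<noteq> 0" using d(4) i by force
    ultimately show "wg i = 0" by simp
  qed
  have wgall: "\<forall>i<ng P. wg i = 0" using wgIz wgI by blast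
  have "(\<Sum>i<nh P. wh i *\<^sub>R grad (hc P i) zbar)
        + (\<Sum>i\<in>alpha P zbar \<union> beta P zbar. (- (wP i * \<theta> i)) *\<^sub>R grad (Gc P i) zbar)
        + (\<Sum>i\<in>gamma P zbar \<union> beta P zbar. (- (wP i * (1 - \<theta> i))) *\<^sub>R grad (Hc P i) zbar) = 0"
    using eq2 wgIz unfolding SG_def SH_def by (simp add: sum_negf)
  from LI[OF this] have L: "\<forall>i<nh P. wh i = 0" "\<forall>i\<in>alpha P zbar \<union> beta P zbar. wP i * \<theta> i = 0"
      "\<forall>i\<in>gamma P zbar \<union> beta P zbar. wP i * (1 - \<theta> i) = 0" by auto
  have "\<forall>i<mc P. wP i = 0"
  proof (intro allI impI)
    fix i assume "i < mc P"
    then consider "i \<in> alpha P zbar" | "i \<in> beta P zbar" | "i \<in> gamma P zbar" using mc_part by blast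
    then show "wP i = 0"
    proof cases
      case 1 then show ?thesis using L(2) ta by force
    next
      case 2
      then have "wP i * \<theta> i = 0" "wP i * (1 - \<theta> i) = 0" using L(2,3) by auto
      moreover have "wP i = wP i * \<theta> i + wP i * (1 - \<theta> i)" by (simp add: algebra_simps)
      ultimately show ?thesis by linarith
    next
      case 3 then show ?thesis using L(3) tg by force
    qed
  qed
  then show ?thesis using wgall L(1) by blast
qed

end

context mpcc_alg begin

lemma bounded_mult:
  "\<exists>K B. \<forall>k\<ge>K. (\<forall>i<ng P. \<bar>ug k i\<bar> \<le> B) \<and> (\<forall>i<nh P. \<bar>uh k i\<bar> \<le> B) \<and> (\<forall>i<mc P. \<bar>uP k i\<bar> \<le> B)"
proof -
  define M where "M k = (\<Sum>i<ng P. \<bar>ug k i\<bar>) + (\<Sum>i<nh P. \<bar>uh k i\<bar>) + (\<Sum>i<mc P. \<bar>uP k i\<bar>)" for k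
  have s1: "\<bar>ug k i\<bar> \<le> (\<Sum>i<ng P. \<bar>ug k i\<bar>)" if "i < ng P" for k i
    by (rule member_le_sum) (use that in auto)
  have s2: "\<bar>uh k i\<bar> \<le> (\<Sum>i<nh P. \<bar>uh k i\<bar>)" if "i < nh P" for k i
    by (rule member_le_sum) (use that in auto)
  have s3: "\<bar>uP k i\<bar> \<le> (\<Sum>i<mc P. \<bar>uP k i\<bar>)" if "i < mc P" for k i
    by (rule member_le_sum) (use that in auto)
  have n1: "0 \<le> (\<Sum>i<ng P. \<bar>ug k i\<bar>)" "0 \<le> (\<Sum>i<nh P. \<bar>uh k i\<bar>)" "0 \<le> (\<Sum>i<mc P. \<bar>uP k i\<bar>)" for k
    by (simp_all add: sum_nonneg)
  have Mg: "\<bar>ug k i\<bar> \<le> M k" if "i < ng P" for k i using s1[OF that, of k] n1[of k] unfolding M_def by linarith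
  have Mh: "\<bar>uh k i\<bar> \<le> M k" if "i < nh P" for k i using s2[OF that, of k] n1[of k] unfolding M_def by linarith
  have MP: "\<bar>uP k i\<bar> \<le> M k" if "i < mc P" for k i using s3[OF that, of k] n1[of k] unfolding M_def by linarith
  have "\<exists>K B. \<forall>k\<ge>K. M k \<le> B"
  proof (rule ccontr)
    assume "\<not> (\<exists>K B. \<forall>k\<ge>K. M k \<le> B)"
    then have "\<forall>K B. \<exists>k\<ge>K. B < M k" by (auto simp: not_le)
    then obtain f where f: "\<And>K B. K \<le> f K B \<and> B < M (f K B)" by metis
    define r where "r = rec_nat (f 0 1) (\<lambda>n rn. f (Suc rn) (real (Suc n) + 1))"
    have r0: "r 0 = f 0 1" and rS: "\<And>n. r (Suc n) = f (Suc (r n)) (real (Suc n) + 1)"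
      by (simp_all add: r_def)
    have rmono: "strict_mono r" unfolding strict_mono_Suc_iff
    proof
      fix n show "r n < r (Suc n)" using f[of "Suc (r n)" "real (Suc n) + 1"] rS[of n] by simp
    qed
    have Mr: "real n + 1 < M (r n)" for n
    proof (cases n)
      case 0 then show ?thesis using f[of 0 1] r0 by simp
    next
      case (Suc m) then show ?thesis using f[of "Suc (r m)" "real (Suc m) + 1"] rS[of m] by simp
    qed
    have Mpos: "0 < M (r n)" for n using Mr[of n] by (simp add: add_nonneg_pos less_trans[OF _ ])
    define c where "c k = inverse (M (r k))" for k
    have cpos: "0 < c k" for k using Mpos[of k] by (simp add: c_def)
    have cM: "c k * M (r k) = 1" for k using Mpos[of k] by (simp add: c_def)
    have bnd_gen: "\<bar>x * c k\<bar> \<le> 1" if "\<bar>x\<bar> \<le> M (r k)" for x k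
    proof -
      have "\<bar>x * c k\<bar> = \<bar>x\<bar> * c k" using cpos[of k] by (simp add: abs_mult)
      also have "\<dots> \<le> M (r k) * c k" using that cpos[of k] by (simp add: mult_right_mono)
      finally show ?thesis using cM[of k] by (simp add: mult.commute)
    qed
    have b1: "\<forall>k. \<forall>i<ng P. \<bar>ug (r k) i * c k\<bar> \<le> (1::real)" using bnd_gen Mg by blast
    have b2: "\<forall>k. \<forall>i<nh P. \<bar>uh (r k) i * c k\<bar> \<le> (1::real)" using bnd_gen Mh by blast
    have b3: "\<forall>k. \<forall>i<mc P. \<bar>uP (r k) i * c k\<bar> \<le> (1::real)" using bnd_gen MP by blast
    have b4: "\<forall>k. \<forall>i<mc P. \<bar>acoef (eps (r k)) P i (z (r k))\<bar> \<le> (1::real)"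
    proof (intro allI impI)
      fix k i
      have "0 \<le> acoef (eps (r k)) P i (z (r k))" "acoef (eps (r k)) P i (z (r k)) \<le> 1" using acoef_bnd by blast+
      then show "\<bar>acoef (eps (r k)) P i (z (r k))\<bar> \<le> 1" by linarith
    qed
    obtain s wg wh wP \<theta> where s: "strict_mono s"
      and cg: "\<forall>i<ng P. (\<lambda>k. ug (r (s k)) i * c (s k)) \<longlonglongrightarrow> wg i"
      and ch: "\<forall>i<nh P. (\<lambda>k. uh (r (s k)) i * c (s k)) \<longlonglongrightarrow> wh i"
      and cP: "\<forall>i<mc P. (\<lambda>k. uP (r (s k)) i * c (s k)) \<longlonglongrightarrow> wP i"
      and ct: "\<forall>i<mc P. (\<lambda>k. acoef (eps (r (s k))) P i (z (r (s k)))) \<longlonglongrightarrow> \<theta> i"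
      using subseq4[OF b1 b2 b3 b4] by blast
    have q: "strict_mono (\<lambda>k. r (s k))" using strict_mono_o[OF rmono s] by (simp add: o_def)
    have c0: "(\<lambda>k. c (s k)) \<longlonglongrightarrow> 0"
    proof (rule tendsto_sandwich[of "\<lambda>k. 0" _ _ "\<lambda>k. inverse (real (Suc k))"])
      show "\<forall>\<^sub>F n in sequentially. 0 \<le> c (s n)" using cpos by (simp add: less_imp_le)
      show "\<forall>\<^sub>F n in sequentially. c (s n) \<le> inverse (real (Suc n))"
      proof (rule always_eventually, rule allI)
        fix n
        have "real n \<le> real (s n)" using seq_suble[OF s, of n] by simp
        then have "real (Suc n) \<le> M (r (s n))" using Mr[of "s n"] by simp
        then show "c (s n) \<le> inverse (real (Suc n))" unfolding c_def
          by (rule le_imp_inverse_le) simp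
      qed
      show "(\<lambda>k. inverse (real (Suc k))) \<longlonglongrightarrow> 0" by (rule LIMSEQ_inverse_real_of_nat)
    qed simp
    have leq: "0 *\<^sub>R grad (obj P) zbar + (\<Sum>i<ng P. wg i *\<^sub>R grad (gc P i) zbar)
       + (\<Sum>i<nh P. wh i *\<^sub>R grad (hc P i) zbar)
       - (\<Sum>i<mc P. wP i *\<^sub>R (\<theta> i *\<^sub>R grad (Gc P i) zbar + (1 - \<theta> i) *\<^sub>R grad (Hc P i) zbar)) = 0"
      by (rule limit_eq[OF q c0 cg ch cP ct])
    have ta: "\<forall>i\<in>alpha P zbar. \<theta> i = 1"
    proof
      fix i assume i: "i \<in> alpha P zbar"
      then have "i < mc P" by (simp add: alpha_def)
      then show "\<theta> i = 1" using acoef_alpha[OF i q] ct by blast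
    qed
    have tg: "\<forall>i\<in>gamma P zbar. \<theta> i = 0"
    proof
      fix i assume i: "i \<in> gamma P zbar"
      then have "i < mc P" by (simp add: gamma_def)
      then show "\<theta> i = 0" using acoef_gamma[OF i q] ct by blast
    qed
    have wg0: "\<forall>i<ng P. 0 \<le> wg i"
    proof (intro allI impI)
      fix i assume i: "i < ng P"
      show "0 \<le> wg i"
      proof (rule tendsto_lowerbound[OF cg[rule_format, OF i]])
        show "\<forall>\<^sub>F k in sequentially. 0 \<le> ug (r (s k)) i * c (s k)"
        proof (rule always_eventually, rule allI)
          fix k
          have "0 \<le> ug (r (s k)) i" using KKT[of "r (s k)"] i unfolding BA_KKT_def by blast
          then show "0 \<le> ug (r (s k)) i * c (s k)" using cpos[of "s k"] by simp
        qed
      qed simp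
    qed
    have wgI: "\<forall>i<ng P. i \<notin> Ig P zbar \<longrightarrow> wg i = 0"
    proof (intro allI impI)
      fix i assume i: "i < ng P" "i \<notin> Ig P zbar"
      obtain N where N: "\<forall>k\<ge>N. ug k i = 0" using ug_evzero[OF i] by blast
      have "\<forall>k\<ge>N. ug (r (s k)) i * c (s k) = 0"
      proof (intro allI impI)
        fix k assume "N \<le> k"
        then have "N \<le> r (s k)" using seq_suble[OF q, of k] by linarith
        then show "ug (r (s k)) i * c (s k) = 0" using N by simp
      qed
      then show "wg i = 0" using lim_evzero cg i by blast
    qed
    have zero: "(\<forall>i<ng P. wg i = 0) \<and> (\<forall>i<nh P. wh i = 0) \<and> (\<forall>i<mc P. wP i = 0)"
      by (rule mfcq_zero[OF wg0 wgI ta tg]) (use leq in simp)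
    define T where "T k = (\<Sum>i<ng P. \<bar>ug (r (s k)) i * c (s k)\<bar>) + (\<Sum>i<nh P. \<bar>uh (r (s k)) i * c (s k)\<bar>)
        + (\<Sum>i<mc P. \<bar>uP (r (s k)) i * c (s k)\<bar>)" for k
    have T1: "T k = 1" for k
    proof -
      have "T k = c (s k) * M (r (s k))" unfolding T_def M_def using cpos[of "s k"]
        by (simp add: abs_mult sum_distrib_right sum_distrib_left distrib_left mult.commute)
      then show ?thesis using cM by simp
    qed
    have "T \<longlonglongrightarrow> (\<Sum>i<ng P. \<bar>wg i\<bar>) + (\<Sum>i<nh P. \<bar>wh i\<bar>) + (\<Sum>i<mc P. \<bar>wP i\<bar>)"
      unfolding T_def using cg ch cP by (intro tendsto_intros) auto
    moreover have "(\<Sum>i<ng P. \<bar>wg i\<bar>) + (\<Sum>i<nh P. \<bar>wh i\<bar>) + (\<Sum>i<mc P. \<bar>wP i\<bar>) = 0"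
      using zero by simp
    moreover have "T \<longlonglongrightarrow> 1"
    proof -
      have "T = (\<lambda>k. 1)" using T1 by (intro ext) simp
      then show ?thesis by simp
    qed
    ultimately show False using LIMSEQ_unique by fastforce
  qed
  then obtain K B where KB: "\<forall>k\<ge>K. M k \<le> B" by blast
  show ?thesis
  proof (rule exI[of _ K], rule exI[of _ B], intro allI impI conjI)
    fix k i assume k: "K \<le> k"
    { assume "i < ng P" then show "\<bar>ug k i\<bar> \<le> B" using Mg[of i k] KB k by force }
    { assume "i < nh P" then show "\<bar>uh k i\<bar> \<le> B" using Mh[of i k] KB k by force }
    { assume "i < mc P" then show "\<bar>uP k i\<bar> \<le> B" using MP[of i k] KB k by force }
  qed
qed

end

context mpcc_alg begin

lemma part2:
  "\<exists>r ugb uhb uPb. strict_mono r \<and>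
        (\<forall>i<ng P. (\<lambda>k. ug (r k) i) \<longlonglongrightarrow> ugb i) \<and>
        (\<forall>i<nh P. (\<lambda>k. uh (r k) i) \<longlonglongrightarrow> uhb i) \<and>
        (\<forall>i<mc P. (\<lambda>k. uP (r k) i) \<longlonglongrightarrow> uPb i)"
proof -
  obtain K B where KB: "\<forall>k\<ge>K. (\<forall>i<ng P. \<bar>ug k i\<bar> \<le> B) \<and> (\<forall>i<nh P. \<bar>uh k i\<bar> \<le> B) \<and> (\<forall>i<mc P. \<bar>uP k i\<bar> \<le> B)"
    using bounded_mult by blast
  have b1: "\<forall>k. \<forall>i<ng P. \<bar>ug (k + K) i\<bar> \<le> B" using KB by simp
  have b2: "\<forall>k. \<forall>i<nh P. \<bar>uh (k + K) i\<bar> \<le> B" using KB by simp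
  have b3: "\<forall>k. \<forall>i<mc P. \<bar>uP (k + K) i\<bar> \<le> B" using KB by simp
  have b4: "\<forall>k. \<forall>i<(0::nat). \<bar>uP (k + K) i\<bar> \<le> B" by simp
  obtain r L1 L2 L3 L4 where r: "strict_mono r"
    "\<forall>i<ng P. (\<lambda>k. ug (r k + K) i) \<longlonglongrightarrow> L1 i"
    "\<forall>i<nh P. (\<lambda>k. uh (r k + K) i) \<longlonglongrightarrow> L2 i"
    "\<forall>i<mc P. (\<lambda>k. uP (r k + K) i) \<longlonglongrightarrow> L3 i"
    using subseq4[OF b1 b2 b3 b4] by blast
  have "strict_mono (\<lambda>k. r k + K)" using r(1) unfolding strict_mono_def by simp
  then show ?thesis using r(2-4) by blast
qed

lemma part3:
  assumes r: "strict_mono r"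
    and cg: "\<forall>i<ng P. (\<lambda>k. ug (r k) i) \<longlonglongrightarrow> ugb i"
    and ch: "\<forall>i<nh P. (\<lambda>k. uh (r k) i) \<longlonglongrightarrow> uhb i"
    and cP: "\<forall>i<mc P. (\<lambda>k. uP (r k) i) \<longlonglongrightarrow> uPb i"
  shows "(\<exists>\<theta>. (\<forall>i\<in>beta P zbar. 0 \<le> \<theta> i \<and> \<theta> i \<le> 1) \<and>
           C_stat_mult P zbar ugb uhb
             (\<lambda>i. if i \<in> beta P zbar then uPb i * \<theta> i else uPb i)
             (\<lambda>i. if i \<in> beta P zbar then uPb i * (1 - \<theta> i) else uPb i)) \<and>
        ((\<forall>i\<in>beta P zbar. 0 \<le> uPb i) \<longrightarrow> S_stationary P zbar \<and> B_stationary P zbar)"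
proof -
  have b: "\<forall>k. \<forall>i<mc P. \<bar>acoef (eps (r k)) P i (z (r k))\<bar> \<le> (1::real)"
  proof (intro allI impI)
    fix k i
    have "0 \<le> acoef (eps (r k)) P i (z (r k))" "acoef (eps (r k)) P i (z (r k)) \<le> 1" using acoef_bnd by blast+
    then show "\<bar>acoef (eps (r k)) P i (z (r k))\<bar> \<le> 1" by linarith
  qed
  obtain s \<theta> where s: "strict_mono s"
    and ct: "\<forall>i<mc P. (\<lambda>k. acoef (eps (r (s k))) P i (z (r (s k)))) \<longlonglongrightarrow> \<theta> i"
    using subseq_multi[OF b] by blast
  have q: "strict_mono (\<lambda>k. r (s k))" using strict_mono_o[OF r s] by (simp add: o_def)
  have sub: "(\<lambda>k. X (r (s k))) \<longlonglongrightarrow> L" if "(\<lambda>k. X (r k)) \<longlonglongrightarrow> L" for X :: "nat \<Rightarrow> real" and L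
    using LIMSEQ_subseq_LIMSEQ[OF that s] by (simp add: o_def)
  have cg': "\<forall>i<ng P. (\<lambda>k. ug (r (s k)) i * 1) \<longlonglongrightarrow> ugb i"
  proof (intro allI impI)
    fix i assume "i < ng P"
    then have "(\<lambda>k. ug (r k) i) \<longlonglongrightarrow> ugb i" using cg by blast
    from sub[of "\<lambda>n. ug n i", OF this] show "(\<lambda>k. ug (r (s k)) i * 1) \<longlonglongrightarrow> ugb i" by simp
  qed
  have ch': "\<forall>i<nh P. (\<lambda>k. uh (r (s k)) i * 1) \<longlonglongrightarrow> uhb i"
  proof (intro allI impI)
    fix i assume "i < nh P"
    then have "(\<lambda>k. uh (r k) i) \<longlonglongrightarrow> uhb i" using ch by blast
    from sub[of "\<lambda>n. uh n i", OF this] show "(\<lambda>k. uh (r (s k)) i * 1) \<longlonglongrightarrow> uhb i" by simp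
  qed
  have cP': "\<forall>i<mc P. (\<lambda>k. uP (r (s k)) i * 1) \<longlonglongrightarrow> uPb i"
  proof (intro allI impI)
    fix i assume "i < mc P"
    then have "(\<lambda>k. uP (r k) i) \<longlonglongrightarrow> uPb i" using cP by blast
    from sub[of "\<lambda>n. uP n i", OF this] show "(\<lambda>k. uP (r (s k)) i * 1) \<longlonglongrightarrow> uPb i" by simp
  qed
  have leq: "1 *\<^sub>R grad (obj P) zbar + (\<Sum>i<ng P. ugb i *\<^sub>R grad (gc P i) zbar)
       + (\<Sum>i<nh P. uhb i *\<^sub>R grad (hc P i) zbar)
       - (\<Sum>i<mc P. uPb i *\<^sub>R (\<theta> i *\<^sub>R grad (Gc P i) zbar + (1 - \<theta> i) *\<^sub>R grad (Hc P i) zbar)) = 0"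
    by (rule limit_eq[OF q _ cg' ch' cP' ct]) simp
  have ta: "\<forall>i\<in>alpha P zbar. \<theta> i = 1"
  proof
    fix i assume i: "i \<in> alpha P zbar"
    then have "i < mc P" by (simp add: alpha_def)
    then show "\<theta> i = 1" using acoef_alpha[OF i q] ct by blast
  qed
  have tg: "\<forall>i\<in>gamma P zbar. \<theta> i = 0"
  proof
    fix i assume i: "i \<in> gamma P zbar"
    then have "i < mc P" by (simp add: gamma_def)
    then show "\<theta> i = 0" using acoef_gamma[OF i q] ct by blast
  qed
  have t01: "0 \<le> \<theta> i \<and> \<theta> i \<le> 1" if i: "i < mc P" for i
  proof
    show "0 \<le> \<theta> i"
      by (rule tendsto_lowerbound[OF ct[rule_format, OF i]]) (simp_all add: acoef_bnd)
    show "\<theta> i \<le> 1"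
      by (rule tendsto_upperbound[OF ct[rule_format, OF i]]) (simp_all add: acoef_bnd)
  qed
  have ug0: "0 \<le> ugb i" if i: "i < ng P" for i
  proof (rule tendsto_lowerbound[OF cg[rule_format, OF i]])
    show "\<forall>\<^sub>F k in sequentially. 0 \<le> ug (r k) i"
    proof (rule always_eventually, rule allI)
      fix k show "0 \<le> ug (r k) i" using KKT[of "r k"] i unfolding BA_KKT_def by blast
    qed
  qed simp
  have ugI: "\<forall>i<ng P. i \<notin> Ig P zbar \<longrightarrow> ugb i = 0"
  proof (intro allI impI)
    fix i assume i: "i < ng P" "i \<notin> Ig P zbar"
    obtain N where N: "\<forall>k\<ge>N. ug k i = 0" using ug_evzero[OF i] by blast
    have "\<forall>k\<ge>N. ug (r k) i = 0"
    proof (intro allI impI)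
      fix k assume "N \<le> k"
      then have "N \<le> r k" using seq_suble[OF r, of k] by linarith
      then show "ug (r k) i = 0" using N by simp
    qed
    then show "ugb i = 0" using lim_evzero cg i by blast
  qed
  define lG where "lG = (\<lambda>i. if i \<in> beta P zbar then uPb i * \<theta> i else uPb i)"
  define lH where "lH = (\<lambda>i. if i \<in> beta P zbar then uPb i * (1 - \<theta> i) else uPb i)"
  have sG: "(\<Sum>i\<in>alpha P zbar \<union> beta P zbar. (uPb i * \<theta> i) *\<^sub>R grad (Gc P i) zbar)
      = (\<Sum>i\<in>alpha P zbar \<union> beta P zbar. lG i *\<^sub>R grad (Gc P i) zbar)"
  proof (rule sum.cong[OF refl])
    fix i assume "i \<in> alpha P zbar \<union> beta P zbar"
    then show "(uPb i * \<theta> i) *\<^sub>R grad (Gc P i) zbar = lG i *\<^sub>R grad (Gc P i) zbar"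
      using ta unfolding lG_def by auto
  qed
  have sH: "(\<Sum>i\<in>gamma P zbar \<union> beta P zbar. (uPb i * (1 - \<theta> i)) *\<^sub>R grad (Hc P i) zbar)
      = (\<Sum>i\<in>gamma P zbar \<union> beta P zbar. lH i *\<^sub>R grad (Hc P i) zbar)"
  proof (rule sum.cong[OF refl])
    fix i assume "i \<in> gamma P zbar \<union> beta P zbar"
    then show "(uPb i * (1 - \<theta> i)) *\<^sub>R grad (Hc P i) zbar = lH i *\<^sub>R grad (Hc P i) zbar"
      using tg unfolding lH_def by auto
  qed
  have W: "weak_stat_mult P zbar ugb uhb lG lH"
    unfolding weak_stat_mult_def
  proof (intro conjI ballI zbar_feas)
    fix i assume "i \<in> Ig P zbar" then show "0 \<le> ugb i" using ug0 by (simp add: Ig_def)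
  next
    show "grad (obj P) zbar + (\<Sum>i\<in>Ig P zbar. ugb i *\<^sub>R grad (gc P i) zbar) +
      (\<Sum>i<nh P. uhb i *\<^sub>R grad (hc P i) zbar) -
      (\<Sum>i\<in>alpha P zbar \<union> beta P zbar. lG i *\<^sub>R grad (Gc P i) zbar) -
      (\<Sum>i\<in>gamma P zbar \<union> beta P zbar. lH i *\<^sub>R grad (Hc P i) zbar) = 0"
      using leq unfolding sum_Ig[OF ugI] split_Phi[OF ta tg] sG sH by (simp add: algebra_simps)
  qed
  have C: "C_stat_mult P zbar ugb uhb lG lH"
    unfolding C_stat_mult_def
  proof (intro conjI ballI W)
    fix i assume i: "i \<in> beta P zbar"
    then have "i < mc P" by (simp add: beta_def)
    then have "0 \<le> \<theta> i * (1 - \<theta> i)" using t01 by simp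
    then have "0 \<le> (uPb i)\<^sup>2 * (\<theta> i * (1 - \<theta> i))" by simp
    moreover have "lG i * lH i = (uPb i)\<^sup>2 * (\<theta> i * (1 - \<theta> i))"
      using i unfolding lG_def lH_def by (simp add: power2_eq_square algebra_simps)
    ultimately show "0 \<le> lG i * lH i" by simp
  qed
  have th01: "\<forall>i\<in>beta P zbar. 0 \<le> \<theta> i \<and> \<theta> i \<le> 1" using t01 by (simp add: beta_def)
  have SB: "S_stationary P zbar \<and> B_stationary P zbar" if nn: "\<forall>i\<in>beta P zbar. 0 \<le> uPb i"
  proof -
    have S: "S_stat_mult P zbar ugb uhb lG lH"
      unfolding S_stat_mult_def
    proof (intro conjI ballI W)
      fix i assume i: "i \<in> beta P zbar"
      then have "0 \<le> \<theta> i" "\<theta> i \<le> 1" "0 \<le> uPb i" using th01 nn by auto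
      then show "0 \<le> lG i" "0 \<le> lH i" using i unfolding lG_def lH_def by simp_all
    qed
    then have "S_stationary P zbar" unfolding S_stationary_def by blast
    moreover have "B_stationary P zbar" by (rule S_imp_B[OF df dg dh dG dH S])
    ultimately show ?thesis by blast
  qed
  show ?thesis using C th01 SB unfolding lG_def lH_def by blast
qed

end

theorem theorem3p1:
  fixes P :: "('a::euclidean_space) mpcc" and \<kappa> :: real and eps :: "nat \<Rightarrow> real"
    and p :: "nat \<Rightarrow> nat \<Rightarrow> real" and z :: "nat \<Rightarrow> 'a" and zbar :: 'a
    and ug uh uP :: "nat \<Rightarrow> nat \<Rightarrow> real"
  assumes "C1_fun (obj P)"
    and "\<forall>i<ng P. C1_fun (gc P i)"
    and "\<forall>i<nh P. C1_fun (hc P i)"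
    and "\<forall>i<mc P. C1_fun (Gc P i)"
    and "\<forall>i<mc P. C1_fun (Hc P i)"
    and "bounding_alg P \<kappa> eps p z ug uh uP"
    and "z \<longlonglongrightarrow> zbar"
    and "MPCC_MFCQ P zbar"
  shows "(\<exists>K B. \<forall>k\<ge>K. (\<forall>i<ng P. \<bar>ug k i\<bar> \<le> B) \<and> (\<forall>i<nh P. \<bar>uh k i\<bar> \<le> B)
                     \<and> (\<forall>i<mc P. \<bar>uP k i\<bar> \<le> B))
   \<and> (\<exists>r ugb uhb uPb. strict_mono r \<and>
        (\<forall>i<ng P. (\<lambda>k. ug (r k) i) \<longlonglongrightarrow> ugb i) \<and>
        (\<forall>i<nh P. (\<lambda>k. uh (r k) i) \<longlonglongrightarrow> uhb i) \<and>
        (\<forall>i<mc P. (\<lambda>k. uP (r k) i) \<longlonglongrightarrow> uPb i))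
   \<and> (\<forall>r ugb uhb uPb. strict_mono r \<and>
        (\<forall>i<ng P. (\<lambda>k. ug (r k) i) \<longlonglongrightarrow> ugb i) \<and>
        (\<forall>i<nh P. (\<lambda>k. uh (r k) i) \<longlonglongrightarrow> uhb i) \<and>
        (\<forall>i<mc P. (\<lambda>k. uP (r k) i) \<longlonglongrightarrow> uPb i) \<longrightarrow>
        (\<exists>\<theta>. (\<forall>i\<in>beta P zbar. 0 \<le> \<theta> i \<and> \<theta> i \<le> 1) \<and>
           C_stat_mult P zbar ugb uhb
             (\<lambda>i. if i \<in> beta P zbar then uPb i * \<theta> i else uPb i)
             (\<lambda>i. if i \<in> beta P zbar then uPb i * (1 - \<theta> i) else uPb i)) \<and>
        ((\<forall>i\<in>beta P zbar. 0 \<le> uPb i) \<longrightarrow> S_stationary P zbar \<and> B_stationary P zbar))"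
proof -
  interpret A: mpcc_alg P \<kappa> eps p z zbar ug uh uP
    by (rule mpcc_alg.intro) (fact assms)+
  show ?thesis
    using A.bounded_mult A.part2 A.part3 by blast
qed

end
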